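(* Let $r>1$. Then there exists $c_r>0$ such that the following holds for all positive integers $k,\ell,m$. Let $n=\ell(k+m)+1$ be the number of vertices of the $(k,\ell,m)$-superstar $S$. Choose $x_0$ uniformly at random from $V(S)$ and run the Moran process with fitness $r$ on $S$ with initial mutant $x_0$. Then the probability that the process goes extinct is at least $1/(c_r(n\log n)^{1/3})$.
   Context: Logarithms are natural. Moran process: given a directed graph $G$ and fitness $r$, one vertex $x_0$ is a mutant, the rest non-mutants. At each step a vertex $v$ is chosen with probability proportional to fitness (mutants $r$, non-mutants $1$), an out-neighbour $w$ of $v$ is chosen uniformly at random and the state of $v$ is copied to $w$. Extinction: eventually no vertex is a mutant. The $(k,\ell,m)$-superstar has vertex set the disjoint union of reservoirs $R_1,\dots,R_\ell$ of size $m$, vertices $v_{i,j}$ ($i\in[\ell]$, $j\in[k]$), and a centre $v^*$; its edges are, for each $i\in[\ell]$: from $v^*$ to every vertex of $R_i$, from every vertex of $R_i$ to $v_{i,1}$, from $v_{i,j}$ to $v_{i,j+1}$ for $j\in[k-1]$, and from $v_{i,k}$ to $v^*$. *)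

theory Defs
  imports "HOL-Probability.Probability"
begin

text \<open>A state of the Moran process is the set
  of mutant vertices. Mutants have fitness r, non-mutants fitness 1.
  One step: choose v with probability proportional to fitness (equivalently:
  with probability r|S|/(r|S|+|V-S|) choose v uniformly among mutants, otherwise
  uniformly among non-mutants), choose an out-neighbour w of v uniformly at random
  and copy the state of v to w.\<close>

definition moran_step :: "'v set \<Rightarrow> ('v \<Rightarrow> 'v \<Rightarrow> bool) \<Rightarrow> real \<Rightarrow> 'v set \<Rightarrow> 'v set pmf" where
  "moran_step V E r S =
     (if S = {} \<or> V \<subseteq> S then return_pmf S
      else bind_pmf (bernoulli_pmf (r * real (card S) / (r * real (card S) + real (card (V - S)))))
        (\<lambda>b. bind_pmf (pmf_of_set (if b then S else V - S))
          (\<lambda>v. bind_pmf (pmf_of_set {w. E v w})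
            (\<lambda>w. return_pmf (if b then insert w S else S - {w})))))"

fun moran_dist :: "'v set \<Rightarrow> ('v \<Rightarrow> 'v \<Rightarrow> bool) \<Rightarrow> real \<Rightarrow> 'v set \<Rightarrow> nat \<Rightarrow> 'v set pmf" where
  "moran_dist V E r S0 0 = return_pmf S0"
| "moran_dist V E r S0 (Suc t) = bind_pmf (moran_dist V E r S0 t) (moran_step V E r)"

text \<open>Extinction probability: probability that eventually no vertex is a mutant.
  Since the empty state is absorbing, the events "extinct at time t" increase in t,
  so this is the supremum over t of the probability of being extinct at time t.\<close>
definition extinction_prob :: "'v set \<Rightarrow> ('v \<Rightarrow> 'v \<Rightarrow> bool) \<Rightarrow> real \<Rightarrow> 'v set \<Rightarrow> real" where
  "extinction_prob V E r S0 = (SUP t. pmf (moran_dist V E r S0 t) {})"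

text \<open>Vertices (0-indexed): Res i a is the a-th vertex of reservoir R_(i+1) (i<l, a<m),
  Path i j is v_(i+1,j+1) (i<l, j<k), Centre is v*.\<close>
datatype ss_vertex = Res nat nat | Path nat nat | Centre

definition superstar_V :: "nat \<Rightarrow> nat \<Rightarrow> nat \<Rightarrow> ss_vertex set" where
  "superstar_V k l m =
     {Res i a | i a. i < l \<and> a < m} \<union> {Path i j | i j. i < l \<and> j < k} \<union> {Centre}"

fun superstar_E :: "nat \<Rightarrow> nat \<Rightarrow> nat \<Rightarrow> ss_vertex \<Rightarrow> ss_vertex \<Rightarrow> bool" where
  "superstar_E k l m Centre (Res i a) = (i < l \<and> a < m)"
| "superstar_E k l m (Res i a) (Path i' j) = (i < l \<and> a < m \<and> i' = i \<and> j = 0 \<and> 0 < k)"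
| "superstar_E k l m (Path i j) (Path i' j') = (i < l \<and> i' = i \<and> j' = Suc j \<and> Suc j < k)"
| "superstar_E k l m (Path i j) Centre = (i < l \<and> Suc j = k)"
| "superstar_E k l m _ _ = False"

end

theory Submission
  imports Defs
begin


definition outs :: "('v \<Rightarrow> 'v \<Rightarrow> bool) \<Rightarrow> 'v \<Rightarrow> 'v set" where
  "outs E v = {w. E v w}"

definition good :: "'v set \<Rightarrow> ('v \<Rightarrow> 'v \<Rightarrow> bool) \<Rightarrow> real \<Rightarrow> bool" where
  "good V E r \<longleftrightarrow> finite V \<and> r > 0 \<and> (\<forall>v\<in>V. finite (outs E v) \<and> outs E v \<noteq> {} \<and> outs E v \<subseteq> V)"

lemma moran_step_absorb: "S = {} \<or> V \<subseteq> S \<Longrightarrow> moran_step V E r S = return_pmf S"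
  by (simp add: moran_step_def)

lemma set_moran_step:
  assumes g: "good V E r" and S: "S \<subseteq> V"
  shows "set_pmf (moran_step V E r S) \<subseteq> Pow V"
proof (cases "S = {} \<or> V \<subseteq> S")
  case True thus ?thesis using S by (simp add: moran_step_def)
next
  case False
  have fS: "finite S" using g S finite_subset unfolding good_def by blast
  have fVS: "finite (V - S)" using g unfolding good_def by auto
  have ne: "V - S \<noteq> {}" using False by auto
  have o: "\<And>v. v \<in> V \<Longrightarrow> finite {w. E v w} \<and> {w. E v w} \<noteq> {} \<and> {w. E v w} \<subseteq> V"
    using g unfolding good_def outs_def by auto
  show ?thesis
  proof
    fix X assume X: "X \<in> set_pmf (moran_step V E r S)"
    obtain b v w where "v \<in> (if b then S else V - S)" "w \<in> {w. E v w}"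
      "X = (if b then insert w S else S - {w})"
    proof -
      from X False obtain b where b: "X \<in> set_pmf (pmf_of_set (if b then S else V - S) \<bind> (\<lambda>v. pmf_of_set {w. E v w} \<bind> (\<lambda>w. return_pmf (if b then insert w S else S - {w}))))"
        by (auto simp: moran_step_def set_bind_pmf)
      have fb: "finite (if b then S else V - S)" "(if b then S else V - S) \<noteq> {}"
        using fS fVS ne False by auto
      from b obtain v where v: "v \<in> (if b then S else V - S)" and
        X2: "X \<in> set_pmf (pmf_of_set {w. E v w} \<bind> (\<lambda>w. return_pmf (if b then insert w S else S - {w})))"
        using fb by (auto simp: set_bind_pmf)
      have "v \<in> V" using v S by (auto split: if_splits)
      with o have "finite {w. E v w}" "{w. E v w} \<noteq> {}" by auto
      with X2 obtain w where "w \<in> {w. E v w}" "X = (if b then insert w S else S - {w})"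
        by (auto simp: set_bind_pmf)
      with that v show ?thesis by blast
    qed
    then show "X \<in> Pow V" using o S by (cases b) auto
  qed
qed

lemma exp_bind_fin:
  fixes h :: "'b \<Rightarrow> real"
  assumes "finite (set_pmf p)" "\<And>x. x \<in> set_pmf p \<Longrightarrow> finite (set_pmf (f x))"
  shows "measure_pmf.expectation (bind_pmf p f) h =
         measure_pmf.expectation p (\<lambda>x. measure_pmf.expectation (f x) h)"
proof -
  have "measure_pmf.expectation (bind_pmf p f) h = (\<Sum>a\<in>set_pmf p. pmf p a *\<^sub>R measure_pmf.expectation (f a) h)"
    using assms by (intro pmf_expectation_bind) auto
  also have "\<dots> = measure_pmf.expectation p (\<lambda>x. measure_pmf.expectation (f x) h)"
    using assms by (subst integral_measure_pmf[of "set_pmf p"]) auto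
  finally show ?thesis .
qed

lemma exp_pmf_of_set:
  fixes h :: "'b \<Rightarrow> real"
  shows "finite A \<Longrightarrow> A \<noteq> {} \<Longrightarrow> measure_pmf.expectation (pmf_of_set A) h = sum h A / card A"
  by (rule integral_pmf_of_set)

lemma exp_step:
  fixes h :: "'v set \<Rightarrow> real"
  assumes g: "good V E r" and S: "S \<subseteq> V" "S \<noteq> {}" "\<not> V \<subseteq> S"
  shows "measure_pmf.expectation (moran_step V E r S) h =
    (\<Sum>v\<in>V. (if v \<in> S then r else 1) / card (outs E v) *
        (\<Sum>w\<in>outs E v. h (if v \<in> S then insert w S else S - {w}))) / (r * card S + card (V - S))"
proof -
  have fV: "finite V" and r: "r > 0" using g unfolding good_def by auto
  have fS: "finite S" using fV S finite_subset by blast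
  have fVS: "finite (V - S)" using fV by auto
  have ne: "V - S \<noteq> {}" using S by auto
  have cS: "card S > 0" using fS S by (simp add: card_gt_0_iff)
  have cVS: "card (V - S) > 0" using fVS ne by (simp add: card_gt_0_iff)
  have o: "\<And>v. v \<in> V \<Longrightarrow> finite (outs E v) \<and> outs E v \<noteq> {} \<and> outs E v \<subseteq> V"
    using g unfolding good_def by auto
  define W where "W = r * card S + card (V - S)"
  have W: "W > 0" using r cS cVS unfolding W_def by (simp add: add_pos_pos)
  define p where "p = r * card S / W"
  have p01: "0 \<le> p" "p \<le> 1" using r cS cVS W unfolding p_def W_def by (auto simp: field_simps)
  define F where "F = (\<lambda>b v. (\<Sum>w\<in>outs E v. h (if b then insert w S else S - {w})) / card (outs E v))"
  have inner: "\<And>b v. v \<in> V \<Longrightarrow> measure_pmf.expectation (pmf_of_set {w. E v w} \<bind> (\<lambda>w. return_pmf (if b then insert w S else S - {w}))) h = F b v"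
  proof -
    fix b v assume v: "v \<in> V"
    have "measure_pmf.expectation (pmf_of_set {w. E v w} \<bind> (\<lambda>w. return_pmf (if b then insert w S else S - {w}))) h
       = measure_pmf.expectation (pmf_of_set {w. E v w}) (\<lambda>w. h (if b then insert w S else S - {w}))"
      using o[OF v] by (subst exp_bind_fin) (auto simp: outs_def)
    also have "\<dots> = F b v" using o[OF v] unfolding F_def outs_def by (subst exp_pmf_of_set) auto
    finally show "?thesis b v" .
  qed
  have mid: "\<And>b. measure_pmf.expectation (pmf_of_set (if b then S else V - S) \<bind> (\<lambda>v. pmf_of_set {w. E v w} \<bind> (\<lambda>w. return_pmf (if b then insert w S else S - {w})))) h
     = (\<Sum>v\<in>(if b then S else V - S). F b v) / card (if b then S else V - S)"
  proof -
    fix b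
    let ?A = "if b then S else V - S"
    have fA: "finite ?A" "?A \<noteq> {}" "?A \<subseteq> V" using fS fVS ne S by auto
    have "measure_pmf.expectation (pmf_of_set ?A \<bind> (\<lambda>v. pmf_of_set {w. E v w} \<bind> (\<lambda>w. return_pmf (if b then insert w S else S - {w})))) h
      = measure_pmf.expectation (pmf_of_set ?A) (\<lambda>v. F b v)"
    proof (subst exp_bind_fin)
      show "finite (set_pmf (pmf_of_set ?A))" using fA by simp
      show "\<And>x. x \<in> set_pmf (pmf_of_set ?A) \<Longrightarrow> finite (set_pmf (pmf_of_set {w. E x w} \<bind> (\<lambda>w. return_pmf (if b then insert w S else S - {w}))))"
      proof -
        fix x assume "x \<in> set_pmf (pmf_of_set ?A)"
        hence "x \<in> V" using fA by auto
        thus "finite (set_pmf (pmf_of_set {w. E x w} \<bind> (\<lambda>w. return_pmf (if b then insert w S else S - {w}))))"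
          using o[of x] by (auto simp: outs_def set_bind_pmf)
      qed
      show "measure_pmf.expectation (pmf_of_set ?A) (\<lambda>x. measure_pmf.expectation (pmf_of_set {w. E x w} \<bind> (\<lambda>w. return_pmf (if b then insert w S else S - {w}))) h) =
            measure_pmf.expectation (pmf_of_set ?A) (F b)"
      proof (intro integral_cong_AE)
        show "AE x in measure_pmf (pmf_of_set ?A). measure_pmf.expectation (pmf_of_set {w. E x w} \<bind> (\<lambda>w. return_pmf (if b then insert w S else S - {w}))) h = F b x"
          unfolding AE_measure_pmf_iff
        proof
          fix x assume "x \<in> set_pmf (pmf_of_set ?A)"
          hence "x \<in> V" using fA by auto
          thus "measure_pmf.expectation (pmf_of_set {w. E x w} \<bind> (\<lambda>w. return_pmf (if b then insert w S else S - {w}))) h = F b x"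
            by (rule inner)
        qed
      qed auto
    qed
    also have "\<dots> = (\<Sum>v\<in>?A. F b v) / card ?A" using fA by (subst exp_pmf_of_set) auto
    finally show "?thesis b" .
  qed
  have "measure_pmf.expectation (moran_step V E r S) h =
      measure_pmf.expectation (bernoulli_pmf p) (\<lambda>b. (\<Sum>v\<in>(if b then S else V - S). F b v) / card (if b then S else V - S))"
    unfolding moran_step_def using S
    apply (simp only: if_False simp_thms)
    apply (subst exp_bind_fin)
    subgoal by simp
    subgoal for b
      using fS fVS ne o S by (auto simp: set_bind_pmf outs_def)
    subgoal using mid unfolding p_def W_def by simp
    done
  also have "\<dots> = (\<Sum>v\<in>S. F True v) / card S * p + (\<Sum>v\<in>V-S. F False v) / card (V - S) * (1 - p)"
    using p01 by simp
  also have "\<dots> = (r * (\<Sum>v\<in>S. F True v) + (\<Sum>v\<in>V-S. F False v)) / W"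
  proof -
    have q: "1 - p = card (V - S) / W" using W unfolding p_def W_def by (simp add: field_simps)
    have alg: "\<And>a b cs cv W::real. cs > 0 \<Longrightarrow> cv > 0 \<Longrightarrow> W > 0 \<Longrightarrow> a/cs*(r*cs/W) + b/cv*(cv/W) = (r*a+b)/W"
      by (simp add: field_simps)
    show ?thesis unfolding q unfolding p_def using cS cVS W by (intro alg) auto
  qed
  also have "r * (\<Sum>v\<in>S. F True v) + (\<Sum>v\<in>V-S. F False v) = (\<Sum>v\<in>V. (if v \<in> S then r else 1) / card (outs E v) *
        (\<Sum>w\<in>outs E v. h (if v \<in> S then insert w S else S - {w})))"
  proof -
    have "(\<Sum>v\<in>V. (if v \<in> S then r else 1) / card (outs E v) *
        (\<Sum>w\<in>outs E v. h (if v \<in> S then insert w S else S - {w}))) =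
        (\<Sum>v\<in>S. (if v \<in> S then r else 1) / card (outs E v) *
        (\<Sum>w\<in>outs E v. h (if v \<in> S then insert w S else S - {w}))) +
        (\<Sum>v\<in>V-S. (if v \<in> S then r else 1) / card (outs E v) *
        (\<Sum>w\<in>outs E v. h (if v \<in> S then insert w S else S - {w})))"
      using sum.subset_diff[OF S(1) fV] by (simp only: add.commute)
    also have "\<dots> = r * (\<Sum>v\<in>S. F True v) + (\<Sum>v\<in>V-S. F False v)"
    proof -
      have 1: "(\<Sum>v\<in>S. (if v \<in> S then r else 1) / card (outs E v) *
        (\<Sum>w\<in>outs E v. h (if v \<in> S then insert w S else S - {w}))) = r * (\<Sum>v\<in>S. F True v)"
        unfolding F_def sum_distrib_left by (rule sum.cong) (auto simp: sum_divide_distrib[symmetric] sum_distrib_left)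
      have 2: "(\<Sum>v\<in>V-S. (if v \<in> S then r else 1) / card (outs E v) *
        (\<Sum>w\<in>outs E v. h (if v \<in> S then insert w S else S - {w}))) = (\<Sum>v\<in>V-S. F False v)"
        unfolding F_def by (rule sum.cong) auto
      show ?thesis using 1 2 by simp
    qed
    finally show ?thesis by simp
  qed
  finally show ?thesis unfolding W_def .
qed

lemma dist_Suc': "moran_dist V E r S (Suc t) = moran_step V E r S \<bind> (\<lambda>S'. moran_dist V E r S' t)"
proof (induction t arbitrary: S)
  case 0 thus ?case by (simp add: bind_return_pmf bind_return_pmf')
next
  case (Suc t)
  have "moran_dist V E r S (Suc (Suc t)) = moran_dist V E r S (Suc t) \<bind> moran_step V E r" by simp
  also have "\<dots> = moran_step V E r S \<bind> (\<lambda>S'. moran_dist V E r S' t \<bind> moran_step V E r)"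
    unfolding Suc by (simp add: bind_assoc_pmf)
  finally show ?case by simp
qed

definition gext where "gext V E r t S = pmf (moran_dist V E r S t) {}"

lemma set_dist: "good V E r \<Longrightarrow> S \<subseteq> V \<Longrightarrow> set_pmf (moran_dist V E r S t) \<subseteq> Pow V"
proof (induction t)
  case 0 thus ?case by simp
next
  case (Suc t)
  have "\<forall>X\<in>set_pmf (moran_dist V E r S t). set_pmf (moran_step V E r X) \<subseteq> Pow V"
    using Suc set_moran_step by blast
  then show ?case by (simp only: moran_dist.simps set_bind_pmf) blast
qed

lemma exp_fin:
  fixes h :: "'v set \<Rightarrow> real"
  assumes "good V E r" "S \<subseteq> V"
  shows "measure_pmf.expectation (moran_step V E r S) h = (\<Sum>a\<in>Pow V. h a * pmf (moran_step V E r S) a)"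
  using assms set_moran_step[OF assms] unfolding good_def
  by (intro integral_measure_pmf_real) auto

lemma gext_Suc:
  assumes "good V E r" "S \<subseteq> V"
  shows "gext V E r (Suc t) S = (\<Sum>a\<in>Pow V. gext V E r t a * pmf (moran_step V E r S) a)"
  unfolding gext_def dist_Suc' pmf_bind by (rule exp_fin[OF assms])

lemma gext_empty: "gext V E r t {} = 1"
proof -
  have "moran_dist V E r {} t = return_pmf {}"
    by (induction t) (auto simp: moran_step_def bind_return_pmf)
  thus ?thesis by (simp add: gext_def)
qed

lemma gext_bounds: "0 \<le> gext V E r t S" "gext V E r t S \<le> 1"
  unfolding gext_def by (auto simp: pmf_le_1)

lemma sum_pmf_Pow:
  assumes "good V E r" "S \<subseteq> V"
  shows "(\<Sum>a\<in>Pow V. pmf (moran_step V E r S) a) = 1"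
proof -
  have "measure_pmf.expectation (moran_step V E r S) (\<lambda>_. 1::real) = 1" by simp
  thus ?thesis using exp_fin[OF assms, of "\<lambda>_. 1"] by simp
qed

lemma gext_mono:
  assumes g: "good V E r"
  shows "S \<subseteq> V \<Longrightarrow> gext V E r t S \<le> gext V E r (Suc t) S"
proof (induction t arbitrary: S)
  case 0
  show ?case
  proof (cases "S = {}")
    case True thus ?thesis by (simp add: gext_empty)
  next
    case False thus ?thesis by (simp add: gext_def)
  qed
next
  case (Suc t)
  have "gext V E r (Suc t) S = (\<Sum>a\<in>Pow V. gext V E r t a * pmf (moran_step V E r S) a)"
    using gext_Suc[OF g Suc.prems] .
  also have "\<dots> \<le> (\<Sum>a\<in>Pow V. gext V E r (Suc t) a * pmf (moran_step V E r S) a)"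
    by (intro sum_mono mult_right_mono Suc.IH) auto
  also have "\<dots> = gext V E r (Suc (Suc t)) S" using gext_Suc[OF g Suc.prems] by simp
  finally show ?case .
qed

lemma ext_lim:
  assumes g: "good V E r" and S: "S \<subseteq> V"
  shows "(\<lambda>t. gext V E r t S) \<longlonglongrightarrow> extinction_prob V E r S"
proof -
  have "incseq (\<lambda>t. gext V E r t S)" using gext_mono[OF g S] by (simp add: incseq_SucI)
  moreover have "bdd_above (range (\<lambda>t. gext V E r t S))" by (rule bdd_aboveI[of _ 1]) (auto simp: gext_bounds)
  ultimately show ?thesis unfolding extinction_prob_def gext_def[symmetric]
    by (intro LIMSEQ_incseq_SUP)
qed

lemma ext_bounds:
  assumes g: "good V E r" and S: "S \<subseteq> V"
  shows "0 \<le> extinction_prob V E r S" "extinction_prob V E r S \<le> 1"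
  by (rule LIMSEQ_le_const[OF ext_lim[OF g S]], simp add: gext_bounds)
     (rule LIMSEQ_le_const2[OF ext_lim[OF g S]], simp add: gext_bounds)

lemma ext_empty: "extinction_prob V E r {} = 1"
  unfolding extinction_prob_def gext_def[symmetric] gext_empty by simp

lemma ext_harmonic:
  assumes g: "good V E r" and S: "S \<subseteq> V"
  shows "extinction_prob V E r S = (\<Sum>a\<in>Pow V. extinction_prob V E r a * pmf (moran_step V E r S) a)"
proof -
  have fV: "finite V" using g unfolding good_def by auto
  have "(\<lambda>t. gext V E r (Suc t) S) \<longlonglongrightarrow> extinction_prob V E r S"
    using ext_lim[OF g S] by (rule LIMSEQ_Suc)
  moreover have "(\<lambda>t. gext V E r (Suc t) S) \<longlonglongrightarrow> (\<Sum>a\<in>Pow V. extinction_prob V E r a * pmf (moran_step V E r S) a)"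
    unfolding gext_Suc[OF g S]
    by (intro tendsto_sum tendsto_mult_right ext_lim[OF g]) auto
  ultimately show ?thesis by (rule LIMSEQ_unique)
qed


definition drift :: "'v set \<Rightarrow> ('v \<Rightarrow> 'v \<Rightarrow> bool) \<Rightarrow> real \<Rightarrow> ('v set \<Rightarrow> real) \<Rightarrow> 'v set \<Rightarrow> real" where
  "drift V E r u S = (\<Sum>v\<in>V. (if v \<in> S then r else 1) / card (outs E v) *
        (\<Sum>w\<in>outs E v. u (if v \<in> S then insert w S else S - {w}) - u S))"

lemma drift_sub:
  assumes g: "good V E r" and S: "S \<subseteq> V" "S \<noteq> {}" "\<not> V \<subseteq> S" and d: "drift V E r u S \<ge> 0"
  shows "u S \<le> (\<Sum>a\<in>Pow V. u a * pmf (moran_step V E r S) a)"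
proof -
  have fV: "finite V" and r: "r > 0" using g unfolding good_def by auto
  have o: "\<And>v. v \<in> V \<Longrightarrow> finite (outs E v) \<and> outs E v \<noteq> {} \<and> outs E v \<subseteq> V"
    using g unfolding good_def by auto
  have fS: "finite S" using fV S finite_subset by blast
  define W where "W = r * card S + card (V - S)"
  have cS: "card S > 0" using fS S by (simp add: card_gt_0_iff)
  have W: "W > 0" using r cS unfolding W_def by (simp add: add_pos_nonneg)
  define A where "A = (\<Sum>v\<in>V. (if v \<in> S then r else 1) / card (outs E v) *
        (\<Sum>w\<in>outs E v. u (if v \<in> S then insert w S else S - {w})))"
  have sumc: "(\<Sum>v\<in>V. (if v \<in> S then r else 1) / card (outs E v) * card (outs E v)) = W"
  proof -
    have "(\<Sum>v\<in>V. (if v \<in> S then r else 1) / card (outs E v) * card (outs E v)) = (\<Sum>v\<in>V. (if v \<in> S then r else 1))"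
      using o by (intro sum.cong) (auto simp: card_gt_0_iff)
    also have "\<dots> = r * card S + card (V - S)"
      using fV S by (simp add: sum.If_cases Int_absorb1 Diff_eq)
    finally show ?thesis unfolding W_def .
  qed
  have "drift V E r u S = A - u S * W"
  proof -
    have "drift V E r u S = (\<Sum>v\<in>V. (if v \<in> S then r else 1) / card (outs E v) *
        (\<Sum>w\<in>outs E v. u (if v \<in> S then insert w S else S - {w})) - u S * ((if v \<in> S then r else 1) / card (outs E v) * card (outs E v)))"
      unfolding drift_def by (intro sum.cong) (auto simp: sum_subtractf right_diff_distrib)
    also have "\<dots> = A - u S * W" unfolding A_def sumc[symmetric]
      by (simp add: sum_subtractf sum_distrib_left)
    finally show ?thesis .
  qed
  hence "u S \<le> A / W" using d W by (simp add: field_simps)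
  also have "A / W = measure_pmf.expectation (moran_step V E r S) u"
    using exp_step[OF g S] unfolding A_def W_def by simp
  also have "\<dots> = (\<Sum>a\<in>Pow V. u a * pmf (moran_step V E r S) a)"
    using exp_fin[OF g S(1)] .
  finally show ?thesis .
qed

lemma pos_step:
  assumes g: "good V E r" and S: "S \<subseteq> V" "S \<noteq> {}" "\<not> V \<subseteq> S"
    and v: "v \<in> S" and w: "w \<in> outs E v" "w \<notin> S"
  shows "pmf (moran_step V E r S) (insert w S) > 0"
proof -
  have fV: "finite V" and r: "r > 0" using g unfolding good_def by auto
  have o: "\<And>v. v \<in> V \<Longrightarrow> finite (outs E v) \<and> outs E v \<noteq> {} \<and> outs E v \<subseteq> V"
    using g unfolding good_def by auto
  have fS: "finite S" using fV S finite_subset by blast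
  have cS: "card S > 0" using fS S by (simp add: card_gt_0_iff)
  define T where "T = insert w S"
  define h where "h = (\<lambda>X. if X = T then 1 else (0::real))"
  have "pmf (moran_step V E r S) T = measure_pmf.expectation (moran_step V E r S) h"
    unfolding h_def by (subst integral_measure_pmf_real[of "{T}"]) (simp_all split: if_splits)
  also have "\<dots> = (\<Sum>v\<in>V. (if v \<in> S then r else 1) / card (outs E v) *
        (\<Sum>w\<in>outs E v. h (if v \<in> S then insert w S else S - {w}))) / (r * card S + card (V - S))"
    by (rule exp_step[OF g S])
  finally have eq: "pmf (moran_step V E r S) T = \<dots>" .
  have vV: "v \<in> V" using v S by auto
  have nn: "\<And>v. v \<in> V \<Longrightarrow> 0 \<le> (if v \<in> S then r else 1) / card (outs E v) *
        (\<Sum>w\<in>outs E v. h (if v \<in> S then insert w S else S - {w}))"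
    using r unfolding h_def by (intro mult_nonneg_nonneg sum_nonneg) auto
  have "0 < (if v \<in> S then r else 1) / card (outs E v) *
        (\<Sum>w\<in>outs E v. h (if v \<in> S then insert w S else S - {w}))"
  proof (intro mult_pos_pos)
    show "0 < (if v \<in> S then r else 1) / card (outs E v)" using r v o[OF vV] by (auto simp: card_gt_0_iff)
    have "0 < h (if v \<in> S then insert w S else S - {w})" using v unfolding h_def T_def by simp
    also have "\<dots> \<le> (\<Sum>w\<in>outs E v. h (if v \<in> S then insert w S else S - {w}))"
      using o[OF vV] w unfolding h_def by (intro member_le_sum) auto
    finally show "0 < (\<Sum>w\<in>outs E v. h (if v \<in> S then insert w S else S - {w}))" .
  qed
  also have "\<dots> \<le> (\<Sum>v\<in>V. (if v \<in> S then r else 1) / card (outs E v) *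
        (\<Sum>w\<in>outs E v. h (if v \<in> S then insert w S else S - {w})))"
    using fV vV nn by (intro member_le_sum) auto
  finally have "0 < (\<Sum>v\<in>V. (if v \<in> S then r else 1) / card (outs E v) *
        (\<Sum>w\<in>outs E v. h (if v \<in> S then insert w S else S - {w})))" .
  moreover have "r * card S + card (V - S) > 0" using r cS by (simp add: add_pos_nonneg)
  ultimately show ?thesis unfolding T_def[symmetric] eq by simp
qed

lemma ext_lower:
  assumes g: "good V E r"
    and strong: "\<And>S. S \<subseteq> V \<Longrightarrow> S \<noteq> {} \<Longrightarrow> \<not> V \<subseteq> S \<Longrightarrow> \<exists>v\<in>S. \<exists>w\<in>outs E v. w \<notin> S"
    and u0: "\<And>S. S \<subseteq> V \<Longrightarrow> 0 \<le> u S" and ue: "u {} \<le> 1" and uV: "u V = 0"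
    and dr: "\<And>S. S \<subseteq> V \<Longrightarrow> S \<noteq> {} \<Longrightarrow> \<not> V \<subseteq> S \<Longrightarrow> u S > 0 \<Longrightarrow> drift V E r u S \<ge> 0"
    and S0: "S0 \<subseteq> V"
  shows "u S0 \<le> extinction_prob V E r S0"
proof (rule ccontr)
  assume neg: "\<not> u S0 \<le> extinction_prob V E r S0"
  have fV: "finite V" using g unfolding good_def by auto
  define f where "f = extinction_prob V E r"
  define d where "d = (\<lambda>S. f S - u S)"
  define \<mu> where "\<mu> = Min (d ` Pow V)"
  have fin: "finite (d ` Pow V)" using fV by simp
  have le\<mu>: "\<And>T. T \<subseteq> V \<Longrightarrow> \<mu> \<le> d T" unfolding \<mu>_def using fin by (intro Min_le) auto
  have "\<mu> \<in> d ` Pow V" unfolding \<mu>_def using fin by (intro Min_in) auto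
  then obtain S1 where S1: "S1 \<subseteq> V" "d S1 = \<mu>" by auto
  have \<mu>neg: "\<mu> < 0" using le\<mu>[OF S0] neg unfolding d_def f_def by simp
  define M where "M = {S. S \<subseteq> V \<and> d S = \<mu>}"
  have fM: "finite M" proof (rule finite_subset[of _ "Pow V"])
    show "M \<subseteq> Pow V" unfolding M_def by blast
    show "finite (Pow V)" using fV by simp
  qed
  have M1: "S1 \<in> M" using S1 unfolding M_def by auto
  define c where "c = Max (card ` M)"
  have "c \<in> card ` M" unfolding c_def using fM M1 by (intro Max_in finite_imageI) blast+
  then obtain S where SM: "S \<in> M" and cS: "card S = c" by auto
  have Smax: "\<And>T. T \<in> M \<Longrightarrow> card T \<le> card S" unfolding cS c_def using fM by (intro Max_ge finite_imageI imageI)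
  have SV: "S \<subseteq> V" and dS: "d S = \<mu>" using SM unfolding M_def by auto
  have fS: "0 \<le> f S" unfolding f_def using ext_bounds[OF g SV] by simp
  have uS: "u S > 0" using dS \<mu>neg fS unfolding d_def by simp
  have Sne: "S \<noteq> {}"
  proof
    assume "S = {}"
    hence "d S \<ge> 0" using ue ext_empty[of V E r] unfolding d_def f_def by simp
    thus False using dS \<mu>neg by simp
  qed
  have SnV: "\<not> V \<subseteq> S"
  proof
    assume "V \<subseteq> S" hence "S = V" using SV by auto
    hence "d S \<ge> 0" using uV fS unfolding d_def by simp
    thus False using dS \<mu>neg by simp
  qed
  let ?p = "pmf (moran_step V E r S)"
  have uh: "u S \<le> (\<Sum>a\<in>Pow V. u a * ?p a)" using drift_sub[OF g SV Sne SnV dr[OF SV Sne SnV uS]] .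
  have fh: "f S = (\<Sum>a\<in>Pow V. f a * ?p a)" unfolding f_def by (rule ext_harmonic[OF g SV])
  have sp: "(\<Sum>a\<in>Pow V. ?p a) = 1" by (rule sum_pmf_Pow[OF g SV])
  have "(\<Sum>a\<in>Pow V. (d a - \<mu>) * ?p a) = (\<Sum>a\<in>Pow V. f a * ?p a) - (\<Sum>a\<in>Pow V. u a * ?p a) - \<mu> * (\<Sum>a\<in>Pow V. ?p a)"
  proof -
    have "(\<Sum>a\<in>Pow V. (d a - \<mu>) * ?p a) = (\<Sum>a\<in>Pow V. f a * ?p a - u a * ?p a - \<mu> * ?p a)"
      by (rule sum.cong) (simp_all add: d_def algebra_simps)
    also have "\<dots> = (\<Sum>a\<in>Pow V. f a * ?p a) - (\<Sum>a\<in>Pow V. u a * ?p a) - \<mu> * (\<Sum>a\<in>Pow V. ?p a)"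
      by (simp only: sum_subtractf sum_distrib_left)
    finally show ?thesis .
  qed
  also have "\<dots> \<le> 0"
  proof -
    have "\<mu> = f S - u S" using dS by (simp add: d_def)
    thus ?thesis using uh fh sp by simp
  qed
  finally have s0: "(\<Sum>a\<in>Pow V. (d a - \<mu>) * ?p a) \<le> 0" .
  have nn: "\<And>a. a \<in> Pow V \<Longrightarrow> 0 \<le> (d a - \<mu>) * ?p a" using le\<mu> by auto
  have allz: "\<And>a. a \<in> Pow V \<Longrightarrow> (d a - \<mu>) * ?p a = 0"
  proof -
    have z: "(\<Sum>a\<in>Pow V. (d a - \<mu>) * ?p a) = 0"
      by (rule antisym[OF s0 sum_nonneg]) (rule nn)
    have fP: "finite (Pow V)" using fV by simp
    have "\<forall>a\<in>Pow V. (d a - \<mu>) * ?p a = 0" by (rule iffD1[OF sum_nonneg_eq_0_iff[OF fP nn] z])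
    thus "\<And>a. a \<in> Pow V \<Longrightarrow> (d a - \<mu>) * ?p a = 0" by blast
  qed
  obtain v w where v: "v \<in> S" and w: "w \<in> outs E v" "w \<notin> S" using strong[OF SV Sne SnV] by blast
  have wV: "w \<in> V" using g v w SV unfolding good_def by auto
  have pT: "?p (insert w S) > 0" by (rule pos_step[OF g SV Sne SnV v w])
  have "(d (insert w S) - \<mu>) * ?p (insert w S) = 0" using allz[of "insert w S"] wV SV by simp
  hence "d (insert w S) = \<mu>" using pT by simp
  hence "insert w S \<in> M" using wV SV unfolding M_def by auto
  hence "card (insert w S) \<le> card S" by (rule Smax)
  moreover have "card (insert w S) = card S + 1" using w fV SV by (simp add: finite_subset)
  ultimately show False by simp
qed


definition resset :: "nat \<Rightarrow> nat \<Rightarrow> ss_vertex set" where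
  "resset l m = {Res i a | i a. i < l \<and> a < m}"

lemma outs_Centre: "outs (superstar_E k l m) Centre = resset l m"
proof -
  have "\<And>w. superstar_E k l m Centre w \<longleftrightarrow> w \<in> resset l m"
    by (case_tac w) (auto simp: resset_def)
  thus ?thesis unfolding outs_def by auto
qed

lemma outs_Res: "i < l \<Longrightarrow> a < m \<Longrightarrow> 0 < k \<Longrightarrow> outs (superstar_E k l m) (Res i a) = {Path i 0}"
proof -
  assume "i < l" "a < m" "0 < k"
  hence "\<And>w. superstar_E k l m (Res i a) w \<longleftrightarrow> w = Path i 0"
    by (case_tac w) auto
  thus ?thesis unfolding outs_def by auto
qed

lemma outs_Path1: "i < l \<Longrightarrow> Suc j < k \<Longrightarrow> outs (superstar_E k l m) (Path i j) = {Path i (Suc j)}"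
proof -
  assume "i < l" "Suc j < k"
  hence "\<And>w. superstar_E k l m (Path i j) w \<longleftrightarrow> w = Path i (Suc j)"
    by (case_tac w) auto
  thus ?thesis unfolding outs_def by auto
qed

lemma outs_Path2: "i < l \<Longrightarrow> Suc j = k \<Longrightarrow> outs (superstar_E k l m) (Path i j) = {Centre}"
proof -
  assume "i < l" "Suc j = k"
  hence "\<And>w. superstar_E k l m (Path i j) w \<longleftrightarrow> w = Centre"
    by (case_tac w) auto
  thus ?thesis unfolding outs_def by auto
qed

lemma inV: "v \<in> superstar_V k l m \<longleftrightarrow>
   (case v of Res i a \<Rightarrow> i < l \<and> a < m | Path i j \<Rightarrow> i < l \<and> j < k | Centre \<Rightarrow> True)"
  unfolding superstar_V_def by (cases v) auto

lemma V_eq: "superstar_V k l m = resset l m \<union> {Path i j | i j. i < l \<and> j < k} \<union> {Centre}"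
  unfolding superstar_V_def resset_def by simp

lemma finite_V: "finite (superstar_V k l m)"
proof -
  have "resset l m = (\<lambda>(i,a). Res i a) ` ({..<l} \<times> {..<m})" unfolding resset_def by auto
  hence f1: "finite (resset l m)" by simp
  have "{Path i j | i j. i < l \<and> j < k} = (\<lambda>(i,j). Path i j) ` ({..<l} \<times> {..<k})" by auto
  hence f2: "finite {Path i j | i j. i < l \<and> j < k}" by simp
  show ?thesis unfolding V_eq using f1 f2 by simp
qed

lemma card_V: "card (superstar_V k l m) = l * (k + m) + 1"
proof -
  have e1: "resset l m = (\<lambda>(i,a). Res i a) ` ({..<l} \<times> {..<m})" unfolding resset_def by auto
  have c1: "card (resset l m) = l * m" unfolding e1
    by (subst card_image) (auto simp: inj_on_def)
  have e2: "{Path i j | i j. i < l \<and> j < k} = (\<lambda>(i,j). Path i j) ` ({..<l} \<times> {..<k})" by auto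
  have c2: "card {Path i j | i j. i < l \<and> j < k} = l * k" unfolding e2
    by (subst card_image) (auto simp: inj_on_def)
  have f1: "finite (resset l m)" unfolding e1 by simp
  have f2: "finite {Path i j | i j. i < l \<and> j < k}" unfolding e2 by simp
  have "card (resset l m \<union> {Path i j | i j. i < l \<and> j < k} \<union> {Centre}) =
        card (resset l m) + card {Path i j | i j. i < l \<and> j < k} + 1"
    using f1 f2 by (subst card_Un_disjoint, auto simp: resset_def)+
  thus ?thesis unfolding V_eq c1 c2 by (simp add: algebra_simps)
qed

lemma good_ss:
  assumes "0 < k" "0 < l" "0 < m" "r > 0"
  shows "good (superstar_V k l m) (superstar_E k l m) r"
proof -
  have "\<forall>v\<in>superstar_V k l m. finite (outs (superstar_E k l m) v) \<and> outs (superstar_E k l m) v \<noteq> {} \<and> outs (superstar_E k l m) v \<subseteq> superstar_V k l m"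
  proof
    fix v assume v: "v \<in> superstar_V k l m"
    show "finite (outs (superstar_E k l m) v) \<and> outs (superstar_E k l m) v \<noteq> {} \<and> outs (superstar_E k l m) v \<subseteq> superstar_V k l m"
    proof (cases v)
      case (Res i a)
      thus ?thesis using v assms by (simp add: inV outs_Res)
    next
      case (Path i j)
      thus ?thesis using v assms
        by (cases "Suc j < k") (auto simp: inV outs_Path1 outs_Path2)
    next
      case Centre
      have "resset l m = (\<lambda>(i,a). Res i a) ` ({..<l} \<times> {..<m})" unfolding resset_def by auto
      hence "finite (resset l m)" by simp
      moreover have "Res 0 0 \<in> resset l m" using assms unfolding resset_def by auto
      moreover have "resset l m \<subseteq> superstar_V k l m" unfolding V_eq by auto
      ultimately show ?thesis using Centre by (auto simp: outs_Centre)
    qed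
  qed
  thus ?thesis unfolding good_def using finite_V assms by auto
qed

lemma strong_ss:
  assumes k: "0 < k" and m: "0 < m" and S: "S \<subseteq> superstar_V k l m" "S \<noteq> {}" "\<not> superstar_V k l m \<subseteq> S"
  shows "\<exists>v\<in>S. \<exists>w\<in>outs (superstar_E k l m) v. w \<notin> S"
proof (rule ccontr)
  let ?V = "superstar_V k l m" and ?E = "superstar_E k l m"
  assume "\<not> ?thesis"
  hence cl: "\<And>v w. v \<in> S \<Longrightarrow> w \<in> outs ?E v \<Longrightarrow> w \<in> S" by blast
  have pathC: "\<And>i j. i < l \<Longrightarrow> j < k \<Longrightarrow> Path i j \<in> S \<Longrightarrow> Centre \<in> S"
  proof -
    fix i j assume i: "i < l" and j: "j < k" and P: "Path i j \<in> S"
    have "\<And>d. d + j + 1 = k \<Longrightarrow> Path i j \<in> S \<Longrightarrow> Centre \<in> S"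
    proof -
      fix d show "d + j + 1 = k \<Longrightarrow> Path i j \<in> S \<Longrightarrow> Centre \<in> S"
      proof (induction d arbitrary: j)
        case 0
        hence "Suc j = k" by simp
        thus ?case using cl[of "Path i j" Centre] outs_Path2[OF i \<open>Suc j = k\<close>, of m] 0 by simp
      next
        case (Suc d)
        hence "Suc j < k" by simp
        hence "Path i (Suc j) \<in> S" using cl[of "Path i j" "Path i (Suc j)"] outs_Path1[OF i \<open>Suc j < k\<close>, of m] Suc.prems by simp
        thus ?case using Suc.IH[of "Suc j"] Suc.prems by simp
      qed
    qed
    thus "Centre \<in> S" using P j by (metis add.commute less_imp_Suc_add add_Suc_right plus_1_eq_Suc)
  qed
  obtain v where v: "v \<in> S" using S by auto
  have C: "Centre \<in> S"
  proof (cases v)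
    case (Res i a)
    hence ia: "i < l" "a < m" using v S by (auto simp: inV)
    hence "Path i 0 \<in> S" using cl[of v "Path i 0"] outs_Res[OF ia k] v Res by simp
    thus ?thesis using pathC ia k by blast
  next
    case (Path i j)
    hence "i < l" "j < k" using v S(1) by (auto simp: inV)
    thus ?thesis using v Path pathC by blast
  next
    case Centre thus ?thesis using v by simp
  qed
  have R: "\<And>i a. i < l \<Longrightarrow> a < m \<Longrightarrow> Res i a \<in> S"
    using cl[OF C] by (auto simp: outs_Centre resset_def)
  have P: "\<And>i j. i < l \<Longrightarrow> j < k \<Longrightarrow> Path i j \<in> S"
  proof -
    fix i j assume i: "i < l" and j: "j < k"
    show "Path i j \<in> S" using j
    proof (induction j)
      case 0
      show ?case using cl[OF R[OF i m]] outs_Res[OF i m k] by simp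
    next
      case (Suc j)
      hence "Suc j < k" "Path i j \<in> S" by simp_all
      thus ?case using cl[of "Path i j" "Path i (Suc j)"] outs_Path1[OF i \<open>Suc j < k\<close>, of m] by simp
    qed
  qed
  have "?V \<subseteq> S"
  proof
    fix v assume "v \<in> ?V" thus "v \<in> S" using C R P by (cases v) (auto simp: inV)
  qed
  thus False using S by simp
qed


definition nxt :: "ss_vertex set \<Rightarrow> ss_vertex \<Rightarrow> ss_vertex \<Rightarrow> ss_vertex set" where
  "nxt S v w = (if v \<in> S then insert w S else S - {w})"

definition fit :: "real \<Rightarrow> ss_vertex set \<Rightarrow> ss_vertex \<Rightarrow> real" where
  "fit r S v = (if v \<in> S then r else 1)"

definition contrib where
  "contrib k l m r u S v = fit r S v / card (outs (superstar_E k l m) v) *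
        (\<Sum>w\<in>outs (superstar_E k l m) v. u (nxt S v w) - u S)"

lemma drift_contrib: "drift (superstar_V k l m) (superstar_E k l m) r u S = (\<Sum>v\<in>superstar_V k l m. contrib k l m r u S v)"
  unfolding drift_def contrib_def nxt_def fit_def by (intro sum.cong) auto

lemma card_resset: "card (resset l m) = l * m"
proof -
  have e1: "resset l m = (\<lambda>(i,a). Res i a) ` ({..<l} \<times> {..<m})" unfolding resset_def by auto
  show ?thesis unfolding e1 by (subst card_image) (auto simp: inj_on_def)
qed

lemma finite_resset: "finite (resset l m)"
proof -
  have e1: "resset l m = (\<lambda>(i,a). Res i a) ` ({..<l} \<times> {..<m})" unfolding resset_def by auto
  show ?thesis unfolding e1 by simp
qed

lemma contrib_Res: "i < l \<Longrightarrow> a < m \<Longrightarrow> 0 < k \<Longrightarrow>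
  contrib k l m r u S (Res i a) = fit r S (Res i a) * (u (nxt S (Res i a) (Path i 0)) - u S)"
  unfolding contrib_def by (simp add: outs_Res)

lemma contrib_Path1: "i < l \<Longrightarrow> Suc j < k \<Longrightarrow>
  contrib k l m r u S (Path i j) = fit r S (Path i j) * (u (nxt S (Path i j) (Path i (Suc j))) - u S)"
  unfolding contrib_def by (simp add: outs_Path1)

lemma contrib_Path2: "i < l \<Longrightarrow> Suc j = k \<Longrightarrow>
  contrib k l m r u S (Path i j) = fit r S (Path i j) * (u (nxt S (Path i j) Centre) - u S)"
  unfolding contrib_def by (simp add: outs_Path2)

lemma contrib_Centre:
  "contrib k l m r u S Centre = fit r S Centre / (l * m) * (\<Sum>w\<in>resset l m. u (nxt S Centre w) - u S)"
  unfolding contrib_def by (simp add: outs_Centre card_resset)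

lemma drift_ge_lb:
  assumes "\<And>v. v \<in> superstar_V k l m \<Longrightarrow> contrib k l m r u S v \<ge> lb v"
  shows "drift (superstar_V k l m) (superstar_E k l m) r u S \<ge> (\<Sum>v\<in>superstar_V k l m. lb v)"
  unfolding drift_contrib using assms by (intro sum_mono) auto

lemma sum_delta_V:
  assumes "c \<in> superstar_V k l m"
  shows "(\<Sum>v\<in>superstar_V k l m. if v = c then a else 0) = (a::real)"
  using assms finite_V by (simp add: sum.delta')

lemma sum_fam_V:
  assumes "F \<subseteq> superstar_V k l m"
  shows "(\<Sum>v\<in>superstar_V k l m. if v \<in> F then a else 0) = (a::real) * card F"
proof -
  have "(\<Sum>v\<in>superstar_V k l m. if v \<in> F then a else 0) = (\<Sum>v\<in>F. a)"
    using assms finite_V by (simp add: sum.If_cases Int_absorb1)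
  thus ?thesis by simp
qed


definition lf1 :: "nat \<Rightarrow> nat set \<Rightarrow> nat" where
  "lf1 k Bs = (if Bs - {0} = {} then k else Min (Bs - {0}))"

definition lf :: "nat \<Rightarrow> nat set \<Rightarrow> nat" where
  "lf k Bs = (if Bs = {} then k else Min Bs)"

context
  fixes k :: nat and Bs :: "nat set"
  assumes Bk: "Bs \<subseteq> {..<k}"
begin

lemma fB: "finite Bs" using Bk finite_subset by blast

lemma lf1_ge1: "0 < k \<Longrightarrow> 1 \<le> lf1 k Bs"
proof -
  assume k: "0 < k"
  show ?thesis
  proof (cases "Bs - {0} = {}")
    case True thus ?thesis using k by (simp add: lf1_def)
  next
    case False
    have "Min (Bs - {0}) \<in> Bs - {0}" using False fB by (intro Min_in) auto
    thus ?thesis using False by (simp add: lf1_def)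
  qed
qed

lemma lf1_le: "lf1 k Bs \<le> k"
proof (cases "Bs - {0} = {}")
  case True thus ?thesis by (simp add: lf1_def)
next
  case False
  have "Min (Bs - {0}) \<in> Bs - {0}" using False fB by (intro Min_in) auto
  thus ?thesis using False Bk by (auto simp: lf1_def)
qed

lemma lf1_in: "Bs - {0} \<noteq> {} \<Longrightarrow> lf1 k Bs \<in> Bs \<and> lf1 k Bs \<noteq> 0 \<and> lf1 k Bs < k"
proof -
  assume ne: "Bs - {0} \<noteq> {}"
  have "Min (Bs - {0}) \<in> Bs - {0}" using ne fB by (intro Min_in) auto
  thus ?thesis using ne Bk by (auto simp: lf1_def)
qed

lemma lf1_min: "j \<in> Bs \<Longrightarrow> j \<noteq> 0 \<Longrightarrow> lf1 k Bs \<le> j"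
proof -
  assume j: "j \<in> Bs" "j \<noteq> 0"
  hence ne: "Bs - {0} \<noteq> {}" by auto
  have "Min (Bs - {0}) \<le> j" using j fB by (intro Min_le) auto
  thus ?thesis using ne by (simp add: lf1_def)
qed

lemma lf_le: "lf k Bs \<le> k"
proof (cases "Bs = {}")
  case True thus ?thesis by (simp add: lf_def)
next
  case False
  have "Min Bs \<in> Bs" using False fB by (intro Min_in) auto
  thus ?thesis using False Bk by (auto simp: lf_def)
qed

lemma lf_in: "Bs \<noteq> {} \<Longrightarrow> lf k Bs \<in> Bs"
  using fB by (simp add: lf_def)

lemma lf_min: "j \<in> Bs \<Longrightarrow> lf k Bs \<le> j"
  using fB by (auto simp: lf_def)

end

lemma lf1_cong0: "lf1 k (insert 0 Bs) = lf1 k Bs" "lf1 k (Bs - {0}) = lf1 k Bs"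
  unfolding lf1_def by (simp_all add: Diff_insert0 insert_Diff_if)

lemma lf1_ins:
  assumes Bk: "Bs \<subseteq> {..<k}" and j: "j \<in> Bs" "j \<noteq> 0" and jk: "Suc j < k"
  shows "lf1 k (insert (Suc j) Bs) = lf1 k Bs"
proof -
  have B2: "insert (Suc j) Bs \<subseteq> {..<k}" using Bk jk by auto
  have le: "lf1 k (insert (Suc j) Bs) \<le> lf1 k Bs"
  proof -
    have ne: "Bs - {0} \<noteq> {}" using j by auto
    have "lf1 k Bs \<in> insert (Suc j) Bs" using lf1_in[OF Bk ne] by auto
    moreover have "lf1 k Bs \<noteq> 0" using lf1_in[OF Bk ne] by auto
    ultimately show ?thesis by (rule lf1_min[OF B2])
  qed
  have "lf1 k Bs \<le> lf1 k (insert (Suc j) Bs)"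
  proof -
    have ne: "insert (Suc j) Bs - {0} \<noteq> {}" by auto
    have mem: "lf1 k (insert (Suc j) Bs) \<in> insert (Suc j) Bs" "lf1 k (insert (Suc j) Bs) \<noteq> 0"
      using lf1_in[OF B2 ne] by auto
    show ?thesis
    proof (cases "lf1 k (insert (Suc j) Bs) = Suc j")
      case True
      have "lf1 k Bs \<le> j" by (rule lf1_min[OF Bk j])
      thus ?thesis using True by simp
    next
      case False
      hence "lf1 k (insert (Suc j) Bs) \<in> Bs" using mem by auto
      thus ?thesis using mem(2) by (rule lf1_min[OF Bk])
    qed
  qed
  thus ?thesis using le by simp
qed

lemma lf1_del:
  assumes Bk: "Bs \<subseteq> {..<k}" and j: "j \<noteq> 0"
  shows "lf1 k Bs \<le> lf1 k (Bs - {j})"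
proof (cases "Bs - {j} - {0} = {}")
  case True thus ?thesis using lf1_le[OF Bk] by (simp add: lf1_def)
next
  case False
  have B2: "Bs - {j} \<subseteq> {..<k}" using Bk by auto
  have "lf1 k (Bs - {j}) \<in> Bs - {j}" "lf1 k (Bs - {j}) \<noteq> 0" using lf1_in[OF B2] False by auto
  thus ?thesis by (intro lf1_min[OF Bk]) auto
qed

lemma lf1_del_min:
  assumes Bk: "Bs \<subseteq> {..<k}" and ne: "Bs - {0} \<noteq> {}"
  shows "Suc (lf1 k Bs) \<le> lf1 k (Bs - {lf1 k Bs})"
proof -
  let ?j = "lf1 k Bs"
  have jm: "?j \<in> Bs" "?j \<noteq> 0" "?j < k" using lf1_in[OF Bk ne] by auto
  have B2: "Bs - {?j} \<subseteq> {..<k}" using Bk by auto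
  show ?thesis
  proof (cases "Bs - {?j} - {0} = {}")
    case True thus ?thesis using jm by (simp add: lf1_def)
  next
    case False
    have m2: "lf1 k (Bs - {?j}) \<in> Bs - {?j}" "lf1 k (Bs - {?j}) \<noteq> 0" using lf1_in[OF B2] False by auto
    hence "?j \<le> lf1 k (Bs - {?j})" by (intro lf1_min[OF Bk]) auto
    moreover have "lf1 k (Bs - {?j}) \<noteq> ?j" using m2 by auto
    ultimately show ?thesis by simp
  qed
qed

lemma lf_ins:
  assumes Bk: "Bs \<subseteq> {..<k}" and j: "j \<in> Bs"
  shows "lf k (insert (Suc j) Bs) = lf k Bs"
proof -
  have ne: "Bs \<noteq> {}" using j by auto
  have fB: "finite Bs" using Bk finite_subset by blast
  have "Min (insert (Suc j) Bs) = min (Suc j) (Min Bs)" using fB ne by (simp add: Min_insert)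
  moreover have "Min Bs \<le> j" using fB j by simp
  ultimately show ?thesis using ne by (simp add: lf_def)
qed

lemma lf_del:
  assumes Bk: "Bs \<subseteq> {..<k}"
  shows "lf k Bs \<le> lf k (Bs - {j})"
proof (cases "Bs - {j} = {}")
  case True thus ?thesis using lf_le[OF Bk] by (simp add: lf_def)
next
  case False
  have B2: "Bs - {j} \<subseteq> {..<k}" using Bk by auto
  have "lf k (Bs - {j}) \<in> Bs" using lf_in[OF B2 False] by auto
  thus ?thesis by (rule lf_min[OF Bk])
qed

lemma lf_del_min:
  assumes Bk: "Bs \<subseteq> {..<k}" and ne: "Bs \<noteq> {}"
  shows "Suc (lf k Bs) \<le> lf k (Bs - {lf k Bs})"
proof -
  let ?j = "lf k Bs"
  have jm: "?j \<in> Bs" "?j < k" using lf_in[OF Bk ne] Bk by auto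
  have B2: "Bs - {?j} \<subseteq> {..<k}" using Bk by auto
  show ?thesis
  proof (cases "Bs - {?j} = {}")
    case True thus ?thesis using jm by (simp add: lf_def)
  next
    case False
    have m2: "lf k (Bs - {?j}) \<in> Bs - {?j}" using lf_in[OF B2 False] by auto
    hence "?j \<le> lf k (Bs - {?j})" by (intro lf_min[OF Bk]) auto
    moreover have "lf k (Bs - {?j}) \<noteq> ?j" using m2 by auto
    ultimately show ?thesis by simp
  qed
qed


lemma contrib_nonneg_out:
  assumes "v \<notin> S" "\<And>w. u (S - {w}) \<ge> u S" "r > 0"
  shows "contrib k l m r u S v \<ge> 0"
  unfolding contrib_def fit_def nxt_def using assms by (auto intro!: mult_nonneg_nonneg sum_nonneg divide_nonneg_nonneg)

lemma potA:
  assumes k: "0 < k" and l: "0 < l" and m: "0 < m" and r: "r > 0" and i: "i < l" and j: "j < k"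
  shows "1 / (1 + r) \<le> extinction_prob (superstar_V k l m) (superstar_E k l m) r {Path i j}"
proof -
  let ?V = "superstar_V k l m" and ?E = "superstar_E k l m"
  define x where "x = Path i j"
  define \<alpha> where "\<alpha> = 1 / (1 + r)"
  have \<alpha>: "0 < \<alpha>" "\<alpha> < 1" "(1 - \<alpha>) - r * \<alpha> = 0" using r unfolding \<alpha>_def by (auto simp: field_simps)
  define u where "u = (\<lambda>S::ss_vertex set. if S = {} then 1 else if S = {x} then \<alpha> else 0)"
  define pred where "pred = (if j = 0 then Res i 0 else Path i (j - 1))"
  have xV: "x \<in> ?V" using i j unfolding x_def by (simp add: inV)
  have pV: "pred \<in> ?V" using i j m unfolding pred_def by (auto simp: inV)
  have px: "pred \<noteq> x" unfolding pred_def x_def by auto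
  have g: "good ?V ?E r" by (rule good_ss[OF k l m r])
  have "u {x} \<le> extinction_prob ?V ?E r {x}"
  proof (rule ext_lower[OF g])
    show "\<And>S. S \<subseteq> ?V \<Longrightarrow> S \<noteq> {} \<Longrightarrow> \<not> ?V \<subseteq> S \<Longrightarrow> \<exists>v\<in>S. \<exists>w\<in>outs ?E v. w \<notin> S"
      by (rule strong_ss[OF k m])
    show "\<And>S. 0 \<le> u S" unfolding u_def using \<alpha> by auto
    show "u {} \<le> 1" unfolding u_def by simp
    have "Centre \<in> ?V" by (simp add: inV)
    hence "?V \<noteq> {x}" "?V \<noteq> {}" unfolding x_def by auto
    thus "u ?V = 0" unfolding u_def by simp
    show "{x} \<subseteq> ?V" using xV by simp
    fix S assume S: "S \<subseteq> ?V" "S \<noteq> {}" "\<not> ?V \<subseteq> S" "0 < u S"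
    hence Sx: "S = {x}" unfolding u_def by (auto split: if_splits)
    define lb where "lb = (\<lambda>v. (if v = pred then 1 - \<alpha> else 0) + (if v = x then - r * \<alpha> else 0))"
    have "(\<Sum>v\<in>?V. lb v) = 0"
      unfolding lb_def sum.distrib using sum_delta_V[OF pV] sum_delta_V[OF xV] \<alpha> by simp
    moreover have "drift ?V ?E r u S \<ge> (\<Sum>v\<in>?V. lb v)"
    proof (rule drift_ge_lb)
      fix v assume vV: "v \<in> ?V"
      show "contrib k l m r u S v \<ge> lb v"
      proof (cases "v = x")
        case True
        have "contrib k l m r u S v = r * (0 - \<alpha>)"
        proof (cases "Suc j < k")
          case True
          thus ?thesis using \<open>v = x\<close> Sx i unfolding x_def
            by (simp add: contrib_Path1 fit_def nxt_def u_def x_def)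
        next
          case False
          hence "Suc j = k" using j by simp
          thus ?thesis using \<open>v = x\<close> Sx i unfolding x_def
            by (simp add: contrib_Path2 fit_def nxt_def u_def x_def)
        qed
        thus ?thesis unfolding lb_def using True px by simp
      next
        case False
        hence vS: "v \<notin> S" using Sx by simp
        show ?thesis
        proof (cases "v = pred")
          case True
          have "contrib k l m r u S v = 1 * (1 - \<alpha>)"
          proof (cases "j = 0")
            case True
            thus ?thesis using \<open>v = pred\<close> Sx i m k unfolding pred_def x_def
              by (simp add: contrib_Res fit_def nxt_def u_def x_def)
          next
            case False
            hence "Suc (j - 1) < k" "Suc (j - 1) = j" "j - Suc 0 \<noteq> j" using j by auto
            thus ?thesis using \<open>v = pred\<close> Sx i False unfolding pred_def x_def
              by (simp add: contrib_Path1 fit_def nxt_def u_def x_def)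
          qed
          thus ?thesis unfolding lb_def using True px by simp
        next
          case False
          have "contrib k l m r u S v \<ge> 0"
            by (rule contrib_nonneg_out[OF vS _ r]) (use Sx \<alpha> in \<open>auto simp: u_def\<close>)
          thus ?thesis unfolding lb_def using False \<open>v \<noteq> x\<close> by simp
        qed
      qed
    qed
    ultimately show "drift ?V ?E r u S \<ge> 0" by simp
  qed
  thus ?thesis unfolding u_def x_def \<alpha>_def by simp
qed


lemma contrib_nonneg_out2:
  assumes "v \<notin> S" "\<And>w. w \<in> outs (superstar_E k l m) v \<Longrightarrow> u (S - {w}) \<ge> u S" "r > 0"
  shows "contrib k l m r u S v \<ge> 0"
  unfolding contrib_def fit_def nxt_def using assms by (auto intro!: mult_nonneg_nonneg sum_nonneg divide_nonneg_nonneg)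

lemma outs_notRes:
  assumes "v \<in> superstar_V k l m" "v \<noteq> Centre" "w \<in> outs (superstar_E k l m) v" "0 < k"
  shows "w \<noteq> Res i a"
proof (cases v)
  case (Res i' a')
  thus ?thesis using assms by (auto simp: inV outs_Res)
next
  case (Path i' j)
  thus ?thesis using assms by (cases "Suc j < k") (auto simp: inV outs_Path1 outs_Path2)
next
  case Centre thus ?thesis using assms by simp
qed

lemma sum_resset_delta:
  assumes "c \<in> resset l m"
  shows "(\<Sum>w\<in>resset l m. if w = c then a else 0) = (a::real)"
  using assms finite_resset by (simp add: sum.delta')

lemma potB:
  assumes k: "0 < k" and l: "0 < l" and m: "0 < m" and r: "r > 0" and i: "i < l" and a0: "a0 < m"
  shows "1 / (1 + l * r * (r + 1)) \<le> extinction_prob (superstar_V k l m) (superstar_E k l m) r {Res i a0}"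
proof -
  let ?V = "superstar_V k l m" and ?E = "superstar_E k l m"
  define x where "x = Res i a0"
  define P0 where "P0 = Path i 0"
  define \<alpha> where "\<alpha> = 1 / (1 + l * r * (r + 1))"
  define \<beta> where "\<beta> = (m - 1) * \<alpha> / (m + r)"
  have den: "1 + l * r * (r + 1) > 0" using r l by (simp add: add_pos_nonneg)
  have t0: "l * r * (r + 1) \<ge> 0" using r by simp
  have \<alpha>: "0 < \<alpha>" "\<alpha> \<le> 1" "1 - \<alpha> = l * r * (r + 1) * \<alpha>" using den t0 unfolding \<alpha>_def by (auto simp: field_simps)
  have \<beta>: "0 \<le> \<beta>" "\<beta> \<le> \<alpha>" "\<beta> * (m + r) = (m - 1) * \<alpha>"
    using \<alpha> r m unfolding \<beta>_def by (auto simp: field_simps)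
  define u where "u = (\<lambda>S::ss_vertex set. if S = {} then 1 else if S = {x} then \<alpha> else if S = {x, P0} then \<beta> else 0)"
  have xV: "x \<in> ?V" using i a0 unfolding x_def by (simp add: inV)
  have PV: "P0 \<in> ?V" using i k unfolding P0_def by (simp add: inV)
  have CV: "Centre \<in> ?V" by (simp add: inV)
  have xres: "x \<in> resset l m" using i a0 unfolding x_def resset_def by auto
  have g: "good ?V ?E r" by (rule good_ss[OF k l m r])
  have "u {x} \<le> extinction_prob ?V ?E r {x}"
  proof (rule ext_lower[OF g])
    show "\<And>S. S \<subseteq> ?V \<Longrightarrow> S \<noteq> {} \<Longrightarrow> \<not> ?V \<subseteq> S \<Longrightarrow> \<exists>v\<in>S. \<exists>w\<in>outs ?E v. w \<notin> S"
      by (rule strong_ss[OF k m])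
    show "\<And>S. 0 \<le> u S" unfolding u_def using \<alpha> \<beta> by auto
    show "u {} \<le> 1" unfolding u_def by simp
    have "?V \<noteq> {x}" "?V \<noteq> {}" "?V \<noteq> {x, P0}" using CV unfolding x_def P0_def by auto
    thus "u ?V = 0" unfolding u_def by simp
    show "{x} \<subseteq> ?V" using xV by simp
    fix S assume S: "S \<subseteq> ?V" "S \<noteq> {}" "\<not> ?V \<subseteq> S" "0 < u S"
    hence Scases: "S = {x} \<or> S = {x, P0}" unfolding u_def by (auto split: if_splits)
    have other: "\<And>v. v \<in> ?V \<Longrightarrow> v \<notin> S \<Longrightarrow> v \<noteq> Centre \<Longrightarrow> contrib k l m r u S v \<ge> 0"
    proof -
      fix v assume v: "v \<in> ?V" "v \<notin> S" "v \<noteq> Centre"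
      show "contrib k l m r u S v \<ge> 0"
      proof (rule contrib_nonneg_out2[OF v(2) _ r])
        fix w assume w: "w \<in> outs ?E v"
        hence "w \<noteq> x" unfolding x_def using outs_notRes[OF v(1) v(3) w k] by blast
        thus "u (S - {w}) \<ge> u S" using Scases \<alpha> \<beta> unfolding u_def
          by (cases "w = P0") (auto simp: insert_Diff_if)
      qed
    qed
    from Scases show "drift ?V ?E r u S \<ge> 0"
    proof
      assume Sx: "S = {x}"
      define lb where "lb = (\<lambda>v. (if v = Centre then (1 - \<alpha>) / (l * m) else 0) + (if v = x then r * (\<beta> - \<alpha>) else 0))"
      have "(\<Sum>v\<in>?V. lb v) = (1 - \<alpha>) / (l * m) + r * (\<beta> - \<alpha>)"
        unfolding lb_def sum.distrib using sum_delta_V[OF CV] sum_delta_V[OF xV] by simp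
      also have "\<dots> \<ge> 0"
      proof -
        have "(1 - \<alpha>) / (l * m) = r * (r + 1) * \<alpha> / m" unfolding \<alpha>(3) using l m by (simp add: field_simps)
        also have "\<dots> \<ge> r * (r + 1) * \<alpha> / (m + r)" using r m \<alpha> by (intro divide_left_mono) (auto simp: mult_pos_pos)
        finally have 1: "(1 - \<alpha>) / (l * m) \<ge> r * (r + 1) * \<alpha> / (m + r)" .
        have mr: "real m + r > 0" using r by simp
        have "\<beta> = (real m - 1) * \<alpha> / (m + r)" unfolding \<beta>_def using m by (simp add: of_nat_diff)
        hence "\<beta> - \<alpha> = - (r + 1) * \<alpha> / (m + r)" using mr by (simp add: field_simps)
        hence "r * (\<beta> - \<alpha>) = - r * (r + 1) * \<alpha> / (m + r)" by (simp add: algebra_simps)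
        thus ?thesis using 1 by simp
      qed
      moreover have "drift ?V ?E r u S \<ge> (\<Sum>v\<in>?V. lb v)"
      proof (rule drift_ge_lb)
        fix v assume vV: "v \<in> ?V"
        show "contrib k l m r u S v \<ge> lb v"
        proof (cases "v = Centre")
          case True
          have t: "\<And>w. w \<in> resset l m \<Longrightarrow> u (nxt S Centre w) - u S = (if w = x then 1 - \<alpha> else 0)"
          proof -
            fix w assume "w \<in> resset l m"
            show "u (nxt S Centre w) - u S = (if w = x then 1 - \<alpha> else 0)"
            proof (cases "w = x")
              case True thus ?thesis by (simp add: nxt_def u_def Sx x_def)
            next
              case False
              hence "S - {w} = S" using Sx by auto
              thus ?thesis using False by (simp add: nxt_def Sx x_def)
            qed
          qed
          have "contrib k l m r u S v = 1 / (l * m) * (\<Sum>w\<in>resset l m. if w = x then 1 - \<alpha> else 0)"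
          proof -
            have fC: "fit r S Centre = 1" using Sx by (simp add: fit_def x_def P0_def)
            show ?thesis unfolding True contrib_Centre fC by (simp add: t cong: sum.cong)
          qed
          thus ?thesis unfolding lb_def using True sum_resset_delta[OF xres] by (simp add: x_def)
        next
          case False
          show ?thesis
          proof (cases "v = x")
            case True
            have "contrib k l m r u S v = r * (\<beta> - \<alpha>)"
              using True Sx i a0 k unfolding x_def P0_def
              by (simp add: contrib_Res fit_def nxt_def u_def x_def P0_def insert_commute)
            thus ?thesis unfolding lb_def using True by (simp add: x_def)
          next
            case False
            hence "v \<notin> S" using Sx by simp
            thus ?thesis using other[OF vV _ \<open>v \<noteq> Centre\<close>] False \<open>v \<noteq> Centre\<close> unfolding lb_def by simp
          qed
        qed
      qed
      ultimately show ?thesis by simp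
    next
      assume Sx: "S = {x, P0}"
      define Fam where "Fam = {Res i a | a. a < m \<and> a \<noteq> a0}"
      have FV: "Fam \<subseteq> ?V" using i unfolding Fam_def by (auto simp: inV)
      have cF: "card Fam = m - 1"
      proof -
        have "Fam = (\<lambda>a. Res i a) ` ({..<m} - {a0})" unfolding Fam_def by auto
        hence "card Fam = card ({..<m} - {a0})" by (simp add: card_image inj_on_def)
        thus ?thesis using a0 by simp
      qed
      define lb where "lb = (\<lambda>v. (if v \<in> Fam then \<alpha> - \<beta> else 0) + (if v = P0 then - r * \<beta> else 0)
          + (if v = Centre then - \<beta> / (l * m) else 0))"
      have "(\<Sum>v\<in>?V. lb v) = (\<alpha> - \<beta>) * (m - 1) - r * \<beta> - \<beta> / (l * m)"
        unfolding lb_def sum.distrib using sum_delta_V[OF CV] sum_delta_V[OF PV] sum_fam_V[OF FV] cF m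
        by (simp add: of_nat_diff)
      also have "\<dots> \<ge> 0"
      proof -
        have lm1: "(1::real) \<le> real l * real m" using l m
          by (metis One_nat_def Suc_leI mult_le_mono nat_mult_1 of_nat_1 of_nat_le_iff of_nat_mult)
        have "\<beta> / (l * m) \<le> \<beta> / 1" using \<beta>(1) lm1 by (intro divide_left_mono) auto
        hence "\<beta> / (l * m) \<le> \<beta>" by simp
        moreover have "(\<alpha> - \<beta>) * (m - 1) - r * \<beta> - \<beta> = (m - 1) * \<alpha> - \<beta> * (m + r)" using m by (simp add: algebra_simps of_nat_diff)
        ultimately show ?thesis using \<beta>(3) by simp
      qed
      moreover have "drift ?V ?E r u S \<ge> (\<Sum>v\<in>?V. lb v)"
      proof (rule drift_ge_lb)
        fix v assume vV: "v \<in> ?V"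
        have neq: "P0 \<noteq> Centre" "x \<noteq> Centre" "x \<noteq> P0" "P0 \<notin> Fam" "Centre \<notin> Fam" "x \<notin> Fam"
          unfolding x_def P0_def Fam_def by auto
        show "contrib k l m r u S v \<ge> lb v"
        proof (cases "v = Centre")
          case True
          have t: "\<And>w. w \<in> resset l m \<Longrightarrow> u (nxt S Centre w) - u S = (if w = x then - \<beta> else 0)"
          proof -
            fix w assume w: "w \<in> resset l m"
            show "u (nxt S Centre w) - u S = (if w = x then - \<beta> else 0)"
            proof (cases "w = x")
              case True
              have "S - {w} = {P0}" using True Sx neq by auto
              moreover have "{P0} \<noteq> {}" "{P0} \<noteq> {x}" "{P0} \<noteq> {x, P0}" using neq by auto
              ultimately show ?thesis using True neq by (simp add: nxt_def u_def Sx)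
            next
              case False
              have "w \<noteq> P0" using w unfolding resset_def P0_def by auto
              hence "S - {w} = S" using Sx False by auto
              thus ?thesis using False by (simp add: nxt_def Sx x_def P0_def)
            qed
          qed
          have "contrib k l m r u S v = 1 / (l * m) * (\<Sum>w\<in>resset l m. if w = x then - \<beta> else 0)"
          proof -
            have fC: "fit r S Centre = 1" using Sx by (simp add: fit_def x_def P0_def)
            show ?thesis unfolding True contrib_Centre fC by (simp add: t cong: sum.cong)
          qed
          thus ?thesis unfolding lb_def using True sum_resset_delta[OF xres] neq by (simp add: x_def)
        next
          case nC: False
          show ?thesis
          proof (cases "v \<in> Fam")
            case True
            then obtain a where a: "v = Res i a" "a < m" "a \<noteq> a0" unfolding Fam_def by auto
            have d1: "{Res i a0, Path i 0} - {Path i 0} = {Res i a0}" by auto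
            have "contrib k l m r u S v = 1 * (\<alpha> - \<beta>)"
              using a Sx i k d1 unfolding x_def P0_def
              by (simp add: contrib_Res fit_def nxt_def u_def x_def P0_def)
            thus ?thesis unfolding lb_def using True neq by auto
          next
            case nF: False
            show ?thesis
            proof (cases "v = P0")
              case True
              have "contrib k l m r u S v = r * (0 - \<beta>)"
              proof (cases "Suc 0 < k")
                case True
                have "{Path i (Suc 0), Res i a0, Path i 0} \<noteq> {Res i a0, Path i 0}" by auto
                thus ?thesis using True \<open>v = P0\<close> Sx i unfolding P0_def x_def
                  by (simp add: contrib_Path1 fit_def nxt_def u_def x_def P0_def)
              next
                case False
                hence "Suc 0 = k" using k by simp
                have h: "insert Centre S \<noteq> {}" "insert Centre S \<noteq> {x}" "insert Centre S \<noteq> {x, P0}"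
                  using Sx neq by (auto simp: insert_eq_iff)
                have "u (insert Centre S) = 0" by (simp only: u_def h if_False)
                moreover have "u S = \<beta>" using Sx neq unfolding u_def by simp
                moreover have "P0 \<in> S" using Sx by simp
                ultimately show ?thesis using \<open>v = P0\<close> \<open>Suc 0 = k\<close> i unfolding P0_def
                  by (simp add: contrib_Path2 fit_def nxt_def)
              qed
              thus ?thesis unfolding lb_def using True neq by simp
            next
              case nP: False
              show ?thesis
              proof (cases "v = x")
                case True
                have "contrib k l m r u S v = r * 0"
                proof -
                  have "insert P0 S = S" using Sx by auto
                  thus ?thesis using True Sx i a0 k unfolding x_def P0_def
                    by (simp add: contrib_Res fit_def nxt_def)
                qed
                thus ?thesis unfolding lb_def using True neq by simp
              next
                case False
                hence "v \<notin> S" using Sx nP by simp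
                thus ?thesis using other[OF vV _ nC] nF nP nC unfolding lb_def by simp
              qed
            qed
          qed
        qed
      qed
      ultimately show ?thesis by simp
    qed
  qed
  thus ?thesis unfolding u_def x_def \<alpha>_def by simp
qed


definition ind :: "bool \<Rightarrow> real" where "ind b = (if b then 1 else 0)"

locale CC =
  fixes k l m :: nat and r :: real and i a0 :: nat
  assumes k: "0 < k" and r: "1 < r" and i: "i < l" and a0: "a0 < m"
    and mreg: "4 * r \<le> real m - 1" and lreg: "2 * r * (r * k + 1) \<le> real l - 1"
begin

abbreviation "VV \<equiv> superstar_V k l m"
abbreviation "x \<equiv> Res i a0"

definition trk :: "ss_vertex set \<Rightarrow> bool" where
  "trk S \<longleftrightarrow> S \<subseteq> VV \<and> (\<forall>v\<in>S. v = x \<or> v = Centre \<or> (\<exists>j. v = Path i j))"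

definition Bof :: "ss_vertex set \<Rightarrow> nat set" where "Bof S = {j. Path i j \<in> S}"

definition "\<theta> = r / (real l - 1)"
definition "\<kappa> = (r * k + 1) / (real m - 1)"
definition "\<beta> = 1 / (8 * l * r * (r * k + 1))"
definition "\<delta> = \<beta> / (2 * r)"
definition "\<alpha> = 1 / (64 * r^3 * (r * k + 1))"

definition LX :: "ss_vertex set \<Rightarrow> real" where
  "LX S = \<alpha> - \<beta> * ((real k - real (lf1 k (Bof S))) + \<kappa> * ind (0 \<in> Bof S)) - \<delta> * ind (Centre \<in> S)"
definition LB :: "ss_vertex set \<Rightarrow> real" where
  "LB S = 1 - \<theta> * (r * (real k - real (lf k (Bof S))) + ind (Centre \<in> S))"
definition L :: "ss_vertex set \<Rightarrow> real" where
  "L S = (if x \<in> S then LX S else LB S)"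
definition u :: "ss_vertex set \<Rightarrow> real" where
  "u S = (if trk S then max 0 (L S) else 0)"

lemma l2: "2 \<le> l"
proof -
  have "0 < 2 * r * (r * k + 1)" using r k by (simp add: add_pos_nonneg)
  hence "1 < real l" using lreg by simp
  thus ?thesis by simp
qed

lemma m2: "2 \<le> m"
proof -
  have "1 < real m" using mreg r by simp
  thus ?thesis by simp
qed

lemma rk: "r * k + 1 > 0"
proof -
  have "0 \<le> r * k" using r by simp
  thus ?thesis by simp
qed

lemma params: "0 < \<theta>" "0 < \<kappa>" "0 < \<beta>" "0 < \<delta>" "0 < \<alpha>"
  using r rk l2 m2 unfolding \<theta>_def \<kappa>_def \<beta>_def \<delta>_def \<alpha>_def by auto

lemma \<theta>l: "\<theta> * (real l - 1) = r" using l2 unfolding \<theta>_def by simp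

lemma Bof_sub: "trk S \<Longrightarrow> Bof S \<subseteq> {..<k}"
  unfolding trk_def Bof_def by (auto simp: inV)

lemma ind_ge: "0 \<le> ind b" "ind b \<le> 1" by (auto simp: ind_def)

lemma span1: "trk S \<Longrightarrow> 0 \<le> real k - real (lf1 k (Bof S)) \<and> real k - real (lf1 k (Bof S)) \<le> real k - 1"
  using lf1_le[OF Bof_sub] lf1_ge1[OF Bof_sub k] by auto

lemma span: "trk S \<Longrightarrow> 0 \<le> real k - real (lf k (Bof S)) \<and> real k - real (lf k (Bof S)) \<le> real k"
  using lf_le[OF Bof_sub] by auto

lemma LX_le: "trk S \<Longrightarrow> LX S \<le> \<alpha>"
proof -
  assume t: "trk S"
  have "0 \<le> \<beta> * ((real k - real (lf1 k (Bof S))) + \<kappa> * ind (0 \<in> Bof S))"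
    using span1[OF t] params ind_ge by (intro mult_nonneg_nonneg add_nonneg_nonneg) auto
  moreover have "0 \<le> \<delta> * ind (Centre \<in> S)" using params ind_ge by simp
  ultimately show ?thesis unfolding LX_def by linarith
qed

lemma LB_le: "trk S \<Longrightarrow> LB S \<le> 1"
proof -
  assume t: "trk S"
  have "0 \<le> \<theta> * (r * (real k - real (lf k (Bof S))) + ind (Centre \<in> S))"
    using span[OF t] params ind_ge r by (intro mult_nonneg_nonneg add_nonneg_nonneg) auto
  thus ?thesis unfolding LB_def by linarith
qed

lemma LB_ge: "trk S \<Longrightarrow> 1/2 \<le> LB S"
proof -
  assume t: "trk S"
  have "r * (real k - real (lf k (Bof S))) + ind (Centre \<in> S) \<le> r * k + 1"
    using span[OF t] ind_ge r by (intro add_mono) auto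
  hence "\<theta> * (r * (real k - real (lf k (Bof S))) + ind (Centre \<in> S)) \<le> \<theta> * (r * k + 1)"
    using params by (intro mult_left_mono) auto
  also have "\<theta> * (r * k + 1) \<le> 1/2"
  proof -
    have "\<theta> * (r * k + 1) = r * (r * k + 1) / (real l - 1)" unfolding \<theta>_def by simp
    also have "\<dots> \<le> 1/2" using lreg l2 by (simp add: divide_le_eq)
    finally show ?thesis .
  qed
  finally show ?thesis unfolding LB_def by linarith
qed

lemma u_nonneg: "0 \<le> u S" unfolding u_def by auto

lemma u_ge_L: "trk S \<Longrightarrow> L S \<le> u S" unfolding u_def by auto

lemma u_eq_L: "trk S \<Longrightarrow> 0 < L S \<Longrightarrow> u S = L S" unfolding u_def by auto

lemma \<alpha>_le: "\<alpha> \<le> 1/4"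
proof -
  have "1 \<le> r^3" using r by (simp add: one_le_power)
  moreover have "1 \<le> r * k + 1" using r by simp
  ultimately have h: "1 * 1 \<le> r^3 * (r * k + 1)" using r by (intro mult_mono) auto
  have "\<alpha> = 1 / (64 * (r^3 * (r * k + 1)))" unfolding \<alpha>_def by (simp add: mult.assoc)
  also have "\<dots> \<le> 1 / (64 * 1)" using h by (intro divide_left_mono mult_left_mono) auto
  finally show ?thesis by simp
qed


lemma trk_ins_Path: "trk S \<Longrightarrow> j < k \<Longrightarrow> trk (insert (Path i j) S)"
  unfolding trk_def using i by (auto simp: inV)
lemma trk_ins_C: "trk S \<Longrightarrow> trk (insert Centre S)"
  unfolding trk_def by (auto simp: inV)
lemma trk_ins_x: "trk S \<Longrightarrow> trk (insert x S)"
  unfolding trk_def using i a0 by (auto simp: inV)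
lemma trk_del: "trk S \<Longrightarrow> trk (S - {w})"
  unfolding trk_def by auto

lemma Bof_simps:
  "Bof (insert (Path i j) S) = insert j (Bof S)"
  "Bof (S - {Path i j}) = Bof S - {j}"
  "Bof (insert Centre S) = Bof S" "Bof (S - {Centre}) = Bof S"
  "Bof (insert (Res i' a) S) = Bof S" "Bof (S - {Res i' a}) = Bof S"
  unfolding Bof_def by auto

lemma LX_alt: "LX S = \<alpha> - \<beta> * ((real k - real (lf1 k (Bof S))) + \<kappa> * ind (0 \<in> Bof S)) - \<delta> * ind (Centre \<in> S)"
  by (simp add: LX_def)

lemma LX_fwd: "trk S \<Longrightarrow> j \<in> Bof S \<Longrightarrow> j \<noteq> 0 \<Longrightarrow> Suc j < k \<Longrightarrow> LX (insert (Path i (Suc j)) S) = LX S"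
  unfolding LX_def Bof_simps using lf1_ins[OF Bof_sub] by simp

lemma LX_any: "trk S \<Longrightarrow> trk S' \<Longrightarrow> (0 \<in> Bof S') = (0 \<in> Bof S) \<Longrightarrow> (Centre \<in> S') = (Centre \<in> S) \<Longrightarrow> LX S' \<ge> LX S - \<beta> * k"
proof -
  assume t: "trk S" "trk S'" and e: "(0 \<in> Bof S') = (0 \<in> Bof S)" "(Centre \<in> S') = (Centre \<in> S)"
  have "real k - real (lf1 k (Bof S')) \<le> (real k - real (lf1 k (Bof S))) + k"
    using span1[OF t(1)] span1[OF t(2)] by linarith
  hence "\<beta> * (real k - real (lf1 k (Bof S'))) \<le> \<beta> * ((real k - real (lf1 k (Bof S))) + k)"
    using params by (intro mult_left_mono) auto
  thus ?thesis unfolding LX_def e by (simp add: algebra_simps)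
qed

lemma LX_del: "trk S \<Longrightarrow> j \<noteq> 0 \<Longrightarrow> LX (S - {Path i j}) \<ge> LX S"
proof -
  assume t: "trk S" and j: "j \<noteq> 0"
  have "lf1 k (Bof S) \<le> lf1 k (Bof S - {j})" by (rule lf1_del[OF Bof_sub[OF t] j])
  hence "\<beta> * (real k - real (lf1 k (Bof S - {j}))) \<le> \<beta> * (real k - real (lf1 k (Bof S)))"
    using params by (intro mult_left_mono) auto
  thus ?thesis unfolding LX_def Bof_simps using j by (simp add: algebra_simps)
qed

lemma LX_del_min: "trk S \<Longrightarrow> Bof S - {0} \<noteq> {} \<Longrightarrow> LX (S - {Path i (lf1 k (Bof S))}) \<ge> LX S + \<beta>"
proof -
  assume t: "trk S" and ne: "Bof S - {0} \<noteq> {}"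
  have j: "lf1 k (Bof S) \<noteq> 0" using lf1_in[OF Bof_sub[OF t] ne] by simp
  have "Suc (lf1 k (Bof S)) \<le> lf1 k (Bof S - {lf1 k (Bof S)})" by (rule lf1_del_min[OF Bof_sub[OF t] ne])
  hence "\<beta> * (real k - real (lf1 k (Bof S - {lf1 k (Bof S)}))) \<le> \<beta> * (real k - real (lf1 k (Bof S)) - 1)"
    using params by (intro mult_left_mono) auto
  thus ?thesis unfolding LX_def Bof_simps using j by (simp add: algebra_simps)
qed

lemma LX_ins0: "0 \<notin> Bof S \<Longrightarrow> LX (insert (Path i 0) S) = LX S - \<beta> * \<kappa>"
  unfolding LX_def Bof_simps lf1_cong0 by (simp add: ind_def algebra_simps)

lemma LX_del0: "0 \<in> Bof S \<Longrightarrow> LX (S - {Path i 0}) = LX S + \<beta> * \<kappa>"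
  unfolding LX_def Bof_simps lf1_cong0 by (simp add: ind_def algebra_simps)

lemma LX_insC: "Centre \<notin> S \<Longrightarrow> LX (insert Centre S) = LX S - \<delta>"
  unfolding LX_def Bof_simps by (simp add: ind_def algebra_simps)

lemma LX_delC: "Centre \<in> S \<Longrightarrow> LX (S - {Centre}) = LX S + \<delta>"
  unfolding LX_def Bof_simps by (simp add: ind_def algebra_simps)

lemma LB_fwd: "trk S \<Longrightarrow> j \<in> Bof S \<Longrightarrow> LB (insert (Path i (Suc j)) S) = LB S"
  unfolding LB_def Bof_simps using lf_ins[OF Bof_sub] by simp

lemma LB_del: "trk S \<Longrightarrow> LB (S - {Path i j}) \<ge> LB S"
proof -
  assume t: "trk S"
  have "lf k (Bof S) \<le> lf k (Bof S - {j})" by (rule lf_del[OF Bof_sub[OF t]])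
  hence "\<theta> * (r * (real k - real (lf k (Bof S - {j})))) \<le> \<theta> * (r * (real k - real (lf k (Bof S))))"
    using params r by (intro mult_left_mono) auto
  thus ?thesis unfolding LB_def Bof_simps by (simp add: algebra_simps)
qed

lemma LB_del_min: "trk S \<Longrightarrow> Bof S \<noteq> {} \<Longrightarrow> LB (S - {Path i (lf k (Bof S))}) \<ge> LB S + \<theta> * r"
proof -
  assume t: "trk S" and ne: "Bof S \<noteq> {}"
  have "Suc (lf k (Bof S)) \<le> lf k (Bof S - {lf k (Bof S)})" by (rule lf_del_min[OF Bof_sub[OF t] ne])
  hence "\<theta> * (r * (real k - real (lf k (Bof S - {lf k (Bof S)})))) \<le> \<theta> * (r * (real k - real (lf k (Bof S)) - 1))"
    using params r by (intro mult_left_mono) auto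
  thus ?thesis unfolding LB_def Bof_simps by (simp add: algebra_simps)
qed

lemma LB_insC: "Centre \<notin> S \<Longrightarrow> LB (insert Centre S) = LB S - \<theta>"
  unfolding LB_def Bof_simps by (simp add: ind_def algebra_simps)

lemma LB_delC: "Centre \<in> S \<Longrightarrow> LB (S - {Centre}) = LB S + \<theta>"
  unfolding LB_def Bof_simps by (simp add: ind_def algebra_simps)

lemma uX: "trk S \<Longrightarrow> x \<in> S \<Longrightarrow> LX S \<le> u S" using u_ge_L unfolding L_def by fastforce
lemma uB: "trk S \<Longrightarrow> x \<notin> S \<Longrightarrow> LB S \<le> u S" using u_ge_L unfolding L_def by fastforce


lemma eq_rbk: "r * \<beta> * \<kappa> = 1 / (8 * l * (real m - 1))"
proof -
  have D: "real m - 1 > 0" using m2 by simp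
  have g: "\<And>r X D L::real. r > 0 \<Longrightarrow> X > 0 \<Longrightarrow> D > 0 \<Longrightarrow> L > 0 \<Longrightarrow> r * (1 / (8 * L * r * X)) * (X / D) = 1 / (8 * L * D)"
    by (simp add: field_simps)
  show ?thesis unfolding \<beta>_def \<kappa>_def using g[of r "r * k + 1" "real m - 1" "real l"] r rk D l2 by simp
qed

lemma eq_mk: "(real m - 1) * \<kappa> = r * k + 1"
proof -
  have "real m - 1 > 0" using m2 by simp
  thus ?thesis unfolding \<kappa>_def by simp
qed

lemma eq_rd: "r * \<delta> = \<beta> / 2" using r unfolding \<delta>_def by simp

lemma N1: "r * \<beta> * \<kappa> \<le> (1/2 - \<alpha>) / (l * m)"
proof -
  have m1: "real m - 1 > 0" using m2 by simp
  have "r * \<beta> * \<kappa> = 1 / (8 * l * (real m - 1))" by (rule eq_rbk)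
  also have "\<dots> \<le> (1/4) / (l * m)"
  proof -
    have "4 * (real l * real m) \<le> 8 * real l * (real m - 1)" using m2 l2 by (simp add: algebra_simps)
    thus ?thesis using m1 l2 m2 by (simp add: divide_simps)
  qed
  also have "\<dots> \<le> (1/2 - \<alpha>) / (l * m)" using \<alpha>_le l2 m2 by (intro divide_right_mono) auto
  finally show ?thesis .
qed

lemma N3: "r * \<alpha> + r * \<beta> * \<kappa> \<le> (real l - 1) * \<delta>"
proof -
  have m1: "real m - 1 > 0" using m2 by simp
  have l1: "real l - 1 > 0" using l2 by simp
  have ed: "(real l - 1) * \<delta> = (real l - 1) / (16 * l * r^2 * (r * k + 1))"
    using r rk l2 unfolding \<delta>_def \<beta>_def by (simp add: field_simps power2_eq_square)
  have g: "\<And>r X::real. r > 0 \<Longrightarrow> X > 0 \<Longrightarrow> r * (1 / (64 * r^3 * X)) = 1 / (64 * r^2 * X)"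
    by (simp add: field_simps power2_eq_square power3_eq_cube)
  have ea: "r * \<alpha> = 1 / (64 * r^2 * (r * k + 1))"
    unfolding \<alpha>_def using g[of r "r * k + 1"] r rk by simp
  have A: "r * \<alpha> \<le> (real l - 1) / (32 * l * r^2 * (r * k + 1))"
  proof -
    have "32 * l * r^2 * (r * k + 1) \<le> (real l - 1) * (64 * r^2 * (r * k + 1))"
    proof -
      have "32 * real l \<le> (real l - 1) * 64" using l2 by simp
      hence "32 * real l * (r^2 * (r * k + 1)) \<le> (real l - 1) * 64 * (r^2 * (r * k + 1))"
        using rk by (intro mult_right_mono) auto
      thus ?thesis by (simp add: algebra_simps)
    qed
    thus ?thesis unfolding ea using r rk l2 by (simp add: divide_simps)
  qed
  have B: "r * \<beta> * \<kappa> \<le> (real l - 1) / (32 * l * r^2 * (r * k + 1))"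
  proof -
    have "4 * r^2 * (r * k + 1) \<le> (real m - 1) * (real l - 1)"
    proof -
      have "(4 * r) * (2 * r * (r * k + 1)) \<le> (real m - 1) * (real l - 1)"
        using mreg lreg r rk by (intro mult_mono) auto
      moreover have "4 * r^2 * (r * k + 1) \<le> (4 * r) * (2 * r * (r * k + 1))"
        using r rk by (simp add: power2_eq_square)
      ultimately show ?thesis by linarith
    qed
    hence "32 * l * r^2 * (r * k + 1) \<le> 8 * l * (real m - 1) * (real l - 1)"
    proof -
      assume h: "4 * r^2 * (r * k + 1) \<le> (real m - 1) * (real l - 1)"
      have "8 * real l * (4 * r^2 * (r * k + 1)) \<le> 8 * real l * ((real m - 1) * (real l - 1))"
        using h by (intro mult_left_mono) auto
      thus ?thesis by (simp add: algebra_simps)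
    qed
    hence h2: "32 * l * r^2 * (r * k + 1) \<le> (real l - 1) * (8 * l * (real m - 1))" by (simp add: mult_ac)
    have g: "\<And>a b c::real. a > 0 \<Longrightarrow> b > 0 \<Longrightarrow> b \<le> c * a \<Longrightarrow> 1 / a \<le> c / b"
      by (simp add: divide_simps)
    have "8 * real l * (real m - 1) > 0" using l2 m1 by simp
    moreover have "32 * real l * r^2 * (r * k + 1) > 0" using l2 r rk by simp
    ultimately show ?thesis unfolding eq_rbk using g h2 by (simp add: mult.assoc)
  qed
  have z: "real l * r^2 * (r * k + 1) > 0" using l2 r rk by simp
  have gg: "\<And>y z::real. z > 0 \<Longrightarrow> y / (32 * z) + y / (32 * z) = y / (16 * z)" by (simp add: field_simps)
  have "(real l - 1) / (32 * l * r^2 * (r * k + 1)) + (real l - 1) / (32 * l * r^2 * (r * k + 1)) = (real l - 1) * \<delta>"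
    unfolding ed using gg[OF z, of "real l - 1"] by (simp add: mult.assoc)
  thus ?thesis using A B by linarith
qed


definition "FamR = {Res i a | a. a < m \<and> a \<noteq> a0}"
definition "FamE = {Path i' (k - 1) | i'. i' < l \<and> i' \<noteq> i}"

lemma FamR_sub: "FamR \<subseteq> VV" unfolding FamR_def using i by (auto simp: inV)
lemma FamE_sub: "FamE \<subseteq> VV" unfolding FamE_def using k by (auto simp: inV)

lemma card_FamR: "card FamR = m - 1"
proof -
  have "FamR = (\<lambda>a. Res i a) ` ({..<m} - {a0})" unfolding FamR_def by auto
  hence "card FamR = card ({..<m} - {a0})" by (simp add: card_image inj_on_def)
  thus ?thesis using a0 by simp
qed

lemma card_FamE: "card FamE = l - 1"
proof -
  have "FamE = (\<lambda>i'. Path i' (k - 1)) ` ({..<l} - {i})" unfolding FamE_def by auto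
  hence "card FamE = card ({..<l} - {i})" by (simp add: card_image inj_on_def)
  thus ?thesis using i by simp
qed

definition lbX :: "ss_vertex set \<Rightarrow> ss_vertex \<Rightarrow> real" where
  "lbX S v =
     (if v = Centre then (if Centre \<in> S then - r * \<alpha> else (1/2 - \<alpha>) / (l * m)) else 0)
   + (if v = x then (if 0 \<in> Bof S then 0 else - r * \<beta> * \<kappa>) else 0)
   + (if v \<in> FamR then (if 0 \<in> Bof S then \<beta> * \<kappa> else 0) else 0)
   + (if v \<in> FamE then (if Centre \<in> S then \<delta> else 0) else 0)
   + (if v = Path i 0 then (if 0 \<in> Bof S \<and> Suc 0 < k then - r * \<beta> * k else 0) else 0)
   + (if v = Path i (k - 1) then (if k - 1 \<in> Bof S \<and> Centre \<notin> S then - r * \<delta> else 0) else 0)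
   + (if v = Path i (lf1 k (Bof S) - 1) then (if 0 \<notin> Bof S \<and> Bof S - {0} \<noteq> {} then \<beta> else 0) else 0)"

lemma lbX_sum: assumes t: "trk S"
  shows "(\<Sum>v\<in>VV. lbX S v) =
     (if Centre \<in> S then - r * \<alpha> else (1/2 - \<alpha>) / (l * m))
   + (if 0 \<in> Bof S then 0 else - r * \<beta> * \<kappa>)
   + (if 0 \<in> Bof S then \<beta> * \<kappa> else 0) * (m - 1)
   + (if Centre \<in> S then \<delta> else 0) * (l - 1)
   + (if 0 \<in> Bof S \<and> Suc 0 < k then - r * \<beta> * k else 0)
   + (if k - 1 \<in> Bof S \<and> Centre \<notin> S then - r * \<delta> else 0)
   + (if 0 \<notin> Bof S \<and> Bof S - {0} \<noteq> {} then \<beta> else 0)"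
proof -
  have CV: "Centre \<in> VV" by (simp add: inV)
  have xV: "x \<in> VV" using i a0 by (simp add: inV)
  have P0V: "Path i 0 \<in> VV" using i k by (simp add: inV)
  have PkV: "Path i (k - 1) \<in> VV" using i k by (simp add: inV)
  have "lf1 k (Bof S) - 1 < k" using lf1_le[OF Bof_sub[OF t]] lf1_ge1[OF Bof_sub[OF t] k] by simp
  hence PlV: "Path i (lf1 k (Bof S) - 1) \<in> VV" using i by (simp add: inV)
  show ?thesis unfolding lbX_def sum.distrib
    using sum_delta_V[OF CV] sum_delta_V[OF xV] sum_delta_V[OF P0V] sum_delta_V[OF PkV] sum_delta_V[OF PlV]
      sum_fam_V[OF FamR_sub] sum_fam_V[OF FamE_sub] card_FamR card_FamE m2 l2
    by (simp add: of_nat_diff mult.commute)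
qed

lemma lbX_nonneg: assumes t: "trk S" shows "0 \<le> (\<Sum>v\<in>VV. lbX S v)"
proof -
  have rbk: "0 \<le> r * \<beta> * k" using r params by simp
  have c5: "(if 0 \<in> Bof S \<and> Suc 0 < k then - r * \<beta> * k else 0) \<ge> (if 0 \<in> Bof S then - r * \<beta> * k else 0)"
    using rbk by auto
  have "\<beta> * ((real m - 1) * \<kappa>) = \<beta> * (r * k + 1)" by (simp only: eq_mk)
  hence mk: "\<beta> * \<kappa> * (real m - 1) = \<beta> * (r * k + 1)" by (simp only: mult_ac)
  have rd: "r * \<delta> = \<beta> / 2" by (rule eq_rd)
  have n1: "r * \<beta> * \<kappa> \<le> (1/2 - \<alpha>) / (l * m)" by (rule N1)
  have n3: "r * \<alpha> + r * \<beta> * \<kappa> \<le> (real l - 1) * \<delta>" by (rule N3)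
  have pos: "0 < \<beta>" "0 < \<delta>" "0 < \<kappa>" "0 < \<alpha>" using params by auto
  have m1: "real (m - 1) = real m - 1" "real (l - 1) = real l - 1" using m2 l2 by (auto simp: of_nat_diff)
  have rbk2: "r * \<beta> * k = \<beta> * (r * k)" by simp
  have e: "\<beta> * \<kappa> * (real m - 1) = r * \<beta> * k + \<beta>" using mk by (simp add: algebra_simps)
  have g5: "(if 0 \<in> Bof S \<and> Suc 0 < k then - r * \<beta> * k else 0) \<ge> - (r * \<beta> * k)" using rbk by auto
  have g6: "(if k - 1 \<in> Bof S \<and> Centre \<notin> S then - r * \<delta> else 0) \<ge> - (r * \<delta>)" using pos r by auto
  have g7: "(if 0 \<notin> Bof S \<and> Bof S - {0} \<noteq> {} then \<beta> else 0) \<ge> 0" using pos by auto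
  have sC: "Centre \<in> S \<Longrightarrow> (if Centre \<in> S then - r * \<alpha> else (1 / 2 - \<alpha>) / (l * m)) = - r * \<alpha> \<and> (if Centre \<in> S then \<delta> else 0) * (real l - 1) = \<delta> * (real l - 1) \<and> (if k - 1 \<in> Bof S \<and> Centre \<notin> S then - r * \<delta> else 0) = 0" by simp
  have nC: "Centre \<notin> S \<Longrightarrow> (if Centre \<in> S then - r * \<alpha> else (1 / 2 - \<alpha>) / (l * m)) = (1 / 2 - \<alpha>) / (l * m) \<and> (if Centre \<in> S then \<delta> else 0) * (real l - 1) = 0" by simp
  have s0: "0 \<in> Bof S \<Longrightarrow> (if 0 \<in> Bof S then 0 else - r * \<beta> * \<kappa>) = 0 \<and> (if 0 \<in> Bof S then \<beta> * \<kappa> else 0) * (real m - 1) = \<beta> * \<kappa> * (real m - 1)" by simp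
  have n0: "0 \<notin> Bof S \<Longrightarrow> (if 0 \<in> Bof S then 0 else - r * \<beta> * \<kappa>) = - r * \<beta> * \<kappa> \<and> (if 0 \<in> Bof S then \<beta> * \<kappa> else 0) * (real m - 1) = 0 \<and> (if 0 \<in> Bof S \<and> Suc 0 < k then - r * \<beta> * k else 0) = 0" by simp
  have negs: "- r * \<alpha> = - (r * \<alpha>)" "- r * \<beta> * \<kappa> = - (r * \<beta> * \<kappa>)" "- r * \<beta> * real k = - (r * \<beta> * real k)"
    "- r * \<delta> = - (r * \<delta>)" "0 \<le> r * \<beta> * \<kappa>" using pos r by auto
  have key: "0 \<notin> Bof S \<Longrightarrow> Centre \<notin> S \<Longrightarrow> (if k - 1 \<in> Bof S \<and> Centre \<notin> S then - r * \<delta> else 0) + (if 0 \<notin> Bof S \<and> Bof S - {0} \<noteq> {} then \<beta> else 0) \<ge> 0"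
  proof -
    assume z: "0 \<notin> Bof S" and C: "Centre \<notin> S"
    show ?thesis
    proof (cases "k - 1 \<in> Bof S")
      case True
      hence "Bof S - {0} \<noteq> {}" using z by auto
      thus ?thesis using True z C rd pos by simp
    next
      case False thus ?thesis using pos by simp
    qed
  qed
  show ?thesis unfolding lbX_sum[OF t] m1
  proof (cases "Centre \<in> S"; cases "0 \<in> Bof S")
    assume C: "Centre \<in> S" and z: "0 \<in> Bof S"
    show "0 \<le> (if Centre \<in> S then - r * \<alpha> else (1 / 2 - \<alpha>) / (l * m)) + (if 0 \<in> Bof S then 0 else - r * \<beta> * \<kappa>) + (if 0 \<in> Bof S then \<beta> * \<kappa> else 0) * (real m - 1) + (if Centre \<in> S then \<delta> else 0) * (real l - 1) + (if 0 \<in> Bof S \<and> Suc 0 < k then - r * \<beta> * k else 0) + (if k - 1 \<in> Bof S \<and> Centre \<notin> S then - r * \<delta> else 0) + (if 0 \<notin> Bof S \<and> Bof S - {0} \<noteq> {} then \<beta> else 0)"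
      using sC[OF C] s0[OF z] g5 g7 e n3 pos mult.commute[of "real l - 1" \<delta>] negs by (elim conjE) linarith
  next
    assume C: "Centre \<in> S" and z: "0 \<notin> Bof S"
    show "0 \<le> (if Centre \<in> S then - r * \<alpha> else (1 / 2 - \<alpha>) / (l * m)) + (if 0 \<in> Bof S then 0 else - r * \<beta> * \<kappa>) + (if 0 \<in> Bof S then \<beta> * \<kappa> else 0) * (real m - 1) + (if Centre \<in> S then \<delta> else 0) * (real l - 1) + (if 0 \<in> Bof S \<and> Suc 0 < k then - r * \<beta> * k else 0) + (if k - 1 \<in> Bof S \<and> Centre \<notin> S then - r * \<delta> else 0) + (if 0 \<notin> Bof S \<and> Bof S - {0} \<noteq> {} then \<beta> else 0)"
      using sC[OF C] n0[OF z] g7 n3 pos mult.commute[of "real l - 1" \<delta>] negs by (elim conjE) linarith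
  next
    assume C: "Centre \<notin> S" and z: "0 \<in> Bof S"
    show "0 \<le> (if Centre \<in> S then - r * \<alpha> else (1 / 2 - \<alpha>) / (l * m)) + (if 0 \<in> Bof S then 0 else - r * \<beta> * \<kappa>) + (if 0 \<in> Bof S then \<beta> * \<kappa> else 0) * (real m - 1) + (if Centre \<in> S then \<delta> else 0) * (real l - 1) + (if 0 \<in> Bof S \<and> Suc 0 < k then - r * \<beta> * k else 0) + (if k - 1 \<in> Bof S \<and> Centre \<notin> S then - r * \<delta> else 0) + (if 0 \<notin> Bof S \<and> Bof S - {0} \<noteq> {} then \<beta> else 0)"
      using nC[OF C] s0[OF z] g5 g6 g7 e n1 rd pos mult.commute[of "real l - 1" \<delta>] negs by (elim conjE) linarith
  next
    assume C: "Centre \<notin> S" and z: "0 \<notin> Bof S"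
    show "0 \<le> (if Centre \<in> S then - r * \<alpha> else (1 / 2 - \<alpha>) / (l * m)) + (if 0 \<in> Bof S then 0 else - r * \<beta> * \<kappa>) + (if 0 \<in> Bof S then \<beta> * \<kappa> else 0) * (real m - 1) + (if Centre \<in> S then \<delta> else 0) * (real l - 1) + (if 0 \<in> Bof S \<and> Suc 0 < k then - r * \<beta> * k else 0) + (if k - 1 \<in> Bof S \<and> Centre \<notin> S then - r * \<delta> else 0) + (if 0 \<notin> Bof S \<and> Bof S - {0} \<noteq> {} then \<beta> else 0)"
      using nC[OF C] n0[OF z] key[OF z C] n1 pos mult.commute[of "real l - 1" \<delta>] negs by (elim conjE) linarith
  qed
qed


lemma lbX_Centre: "lbX S Centre = (if Centre \<in> S then - r * \<alpha> else (1/2 - \<alpha>) / (l * m))"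
  unfolding lbX_def FamR_def FamE_def by simp
lemma lbX_x: "lbX S x = (if 0 \<in> Bof S then 0 else - r * \<beta> * \<kappa>)"
  unfolding lbX_def FamR_def FamE_def by simp
lemma lbX_Res: "a \<noteq> a0 \<Longrightarrow> a < m \<Longrightarrow> lbX S (Res i a) = (if 0 \<in> Bof S then \<beta> * \<kappa> else 0)"
  unfolding lbX_def FamR_def FamE_def by simp
lemma lbX_Res2: "i' \<noteq> i \<Longrightarrow> lbX S (Res i' a) = 0"
  unfolding lbX_def FamR_def FamE_def by simp
lemma lbX_Path2: "i' \<noteq> i \<Longrightarrow> i' < l \<Longrightarrow> lbX S (Path i' j) = (if j = k - 1 then (if Centre \<in> S then \<delta> else 0) else 0)"
  unfolding lbX_def FamR_def FamE_def by auto
lemma lbX_Path: "lbX S (Path i j) =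
     (if j = 0 then (if 0 \<in> Bof S \<and> Suc 0 < k then - r * \<beta> * k else 0) else 0)
   + (if j = k - 1 then (if k - 1 \<in> Bof S \<and> Centre \<notin> S then - r * \<delta> else 0) else 0)
   + (if j = lf1 k (Bof S) - 1 then (if 0 \<notin> Bof S \<and> Bof S - {0} \<noteq> {} then \<beta> else 0) else 0)"
  unfolding lbX_def FamR_def FamE_def by auto

lemma trk_Res: "trk S \<Longrightarrow> Res i' a \<in> S \<Longrightarrow> Res i' a = x" unfolding trk_def by auto
lemma trk_Path: "trk S \<Longrightarrow> Path i' j \<in> S \<Longrightarrow> i' = i" unfolding trk_def by auto

lemma term7_zero:
  assumes t: "trk S" and j: "j \<in> Bof S"
  shows "(if j = lf1 k (Bof S) - 1 then (if 0 \<notin> Bof S \<and> Bof S - {0} \<noteq> {} then \<beta> else 0) else 0) = 0"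
proof (cases "j = lf1 k (Bof S) - 1 \<and> 0 \<notin> Bof S \<and> Bof S - {0} \<noteq> {}")
  case True
  hence "j \<noteq> 0" using j by auto
  hence "lf1 k (Bof S) \<le> j" using lf1_min[OF Bof_sub[OF t] j] by simp
  moreover have "1 \<le> lf1 k (Bof S)" using lf1_ge1[OF Bof_sub[OF t] k] .
  ultimately show ?thesis using True by simp
next
  case False thus ?thesis by auto
qed

lemma uXd: "trk S \<Longrightarrow> x \<in> S \<Longrightarrow> w \<noteq> x \<Longrightarrow> LX (S - {w}) \<le> u (S - {w})"
  using uX[OF trk_del, of S w] by simp

lemma ml: "(a::real) \<le> b \<Longrightarrow> r * a \<le> r * b" using r by (intro mult_left_mono) auto

lemma contribX:
  assumes t: "trk S" and xS: "x \<in> S" and pos: "0 < LX S" and v: "v \<in> VV"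
  shows "contrib k l m r u S v \<ge> lbX S v"
proof -
  have uS: "u S = LX S" using u_eq_L[OF t] pos xS unfolding L_def by simp
  have LXa: "LX S \<le> \<alpha>" by (rule LX_le[OF t])
  have pr: "0 < \<beta>" "0 < \<delta>" "0 < \<kappa>" "0 < \<alpha>" using params by auto
  have Bk: "Bof S \<subseteq> {..<k}" by (rule Bof_sub[OF t])
  show ?thesis
  proof (cases v)
    case Centre
    show ?thesis
    proof (cases "Centre \<in> S")
      case True
      have "(\<Sum>w\<in>resset l m. u (nxt S Centre w) - u S) \<ge> (\<Sum>w\<in>resset l m. - LX S)"
        using uS u_nonneg by (intro sum_mono) simp
      also have "(\<Sum>w\<in>resset l m. - LX S) = - (l * m) * LX S" by (simp add: card_resset)
      finally have h: "(\<Sum>w\<in>resset l m. u (nxt S Centre w) - u S) \<ge> - (l * m) * LX S" .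
      have lm: "real l * real m > 0" using l2 m2 by simp
      have "contrib k l m r u S v = r / (l * m) * (\<Sum>w\<in>resset l m. u (nxt S Centre w) - u S)"
        using Centre True by (simp add: contrib_Centre fit_def)
      also have "\<dots> \<ge> r / (l * m) * (- (l * m) * LX S)" using h r lm by (intro mult_left_mono) auto
      also have "r / (l * m) * (- (l * m) * LX S) = - r * LX S"
      proof -
        have g: "\<And>c d::real. d \<noteq> 0 \<Longrightarrow> r / d * (- d * c) = - r * c" by (simp add: field_simps)
        have "real (l * m) \<noteq> 0" using l2 m2 by simp
        from g[OF this, of "LX S"] show ?thesis by simp
      qed
      finally have "contrib k l m r u S v \<ge> - r * LX S" .
      moreover have "- r * LX S \<ge> - r * \<alpha>" using LXa r by simp
      ultimately show ?thesis using Centre True by (simp add: lbX_Centre)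
    next
      case False
      have eq: "\<And>w. w \<in> resset l m \<Longrightarrow> u (nxt S Centre w) - u S = (if w = x then u (S - {x}) - LX S else 0)"
      proof -
        fix w assume w: "w \<in> resset l m"
        show "u (nxt S Centre w) - u S = (if w = x then u (S - {x}) - LX S else 0)"
        proof (cases "w = x")
          case True thus ?thesis using False uS by (simp add: nxt_def)
        next
          case nx: False
          from w obtain i' a where "w = Res i' a" unfolding resset_def by auto
          hence "w \<notin> S" using trk_Res[OF t] nx by blast
          thus ?thesis using False nx uS by (simp add: nxt_def)
        qed
      qed
      have xr: "x \<in> resset l m" using i a0 unfolding resset_def by auto
      have "(\<Sum>w\<in>resset l m. u (nxt S Centre w) - u S) = u (S - {x}) - LX S"
        using eq finite_resset xr by (simp add: sum.delta' cong: sum.cong)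
      moreover have "u (S - {x}) \<ge> 1/2"
        using uB[OF trk_del[OF t], of x] LB_ge[OF trk_del[OF t], of x] by simp
      ultimately have h: "(\<Sum>w\<in>resset l m. u (nxt S Centre w) - u S) \<ge> 1/2 - \<alpha>" using LXa by simp
      have lm: "real l * real m > 0" using l2 m2 by simp
      have "contrib k l m r u S v = 1 / (l * m) * (\<Sum>w\<in>resset l m. u (nxt S Centre w) - u S)"
        using Centre False by (simp add: contrib_Centre fit_def)
      also have "\<dots> \<ge> 1 / (l * m) * (1/2 - \<alpha>)" using h lm by (intro mult_left_mono) auto
      finally show ?thesis using Centre False by (simp add: lbX_Centre)
    qed
  next
    case (Res i' a)
    have ia: "i' < l" "a < m" using v Res by (auto simp: inV)
    have cR: "contrib k l m r u S v = fit r S v * (u (nxt S v (Path i' 0)) - u S)"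
      using Res contrib_Res[OF ia k] by simp
    show ?thesis
    proof (cases "i' = i")
      case True
      show ?thesis
      proof (cases "a = a0")
        case True
        hence vx: "v = x" using Res \<open>i' = i\<close> by simp
        show ?thesis
        proof (cases "0 \<in> Bof S")
          case True
          have "nxt S v (Path i' 0) = S" using vx xS True \<open>i' = i\<close> unfolding nxt_def Bof_def by auto
          thus ?thesis using cR vx True by (simp add: lbX_x)
        next
          case False
          have "u (nxt S v (Path i' 0)) \<ge> LX S - \<beta> * \<kappa>"
          proof -
            have "nxt S v (Path i' 0) = insert (Path i 0) S" using vx xS \<open>i' = i\<close> unfolding nxt_def by simp
            moreover have "LX (insert (Path i 0) S) = LX S - \<beta> * \<kappa>" by (rule LX_ins0[OF False])
            moreover have "LX (insert (Path i 0) S) \<le> u (insert (Path i 0) S)"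
              using uX[OF trk_ins_Path[OF t k]] xS by simp
            ultimately show ?thesis by simp
          qed
          hence "r * (- \<beta> * \<kappa>) \<le> r * (u (nxt S v (Path i' 0)) - u S)" using uS by (intro ml) simp
          hence "contrib k l m r u S v \<ge> r * (- \<beta> * \<kappa>)" using cR vx xS unfolding fit_def by simp
          thus ?thesis using vx False by (simp add: lbX_x)
        qed
      next
        case False
        have vS: "v \<notin> S" using trk_Res[OF t] Res False by auto
        show ?thesis
        proof (cases "0 \<in> Bof S")
          case True
          have "u (nxt S v (Path i' 0)) \<ge> LX S + \<beta> * \<kappa>"
          proof -
            have "nxt S v (Path i' 0) = S - {Path i 0}" using vS \<open>i' = i\<close> unfolding nxt_def by simp
            moreover have "LX (S - {Path i 0}) = LX S + \<beta> * \<kappa>" by (rule LX_del0[OF True])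
            moreover have "LX (S - {Path i 0}) \<le> u (S - {Path i 0})"
              using uXd[OF t xS, of "Path i 0"] by simp
            ultimately show ?thesis by simp
          qed
          hence "contrib k l m r u S v \<ge> \<beta> * \<kappa>" using cR vS uS unfolding fit_def by simp
          thus ?thesis using Res \<open>i' = i\<close> False True ia by (simp add: lbX_Res)
        next
          case nz: False
          have "nxt S v (Path i' 0) = S" using vS \<open>i' = i\<close> nz unfolding nxt_def Bof_def by auto
          thus ?thesis using cR Res \<open>i' = i\<close> False nz ia by (simp add: lbX_Res)
        qed
      qed
    next
      case False
      have vS: "v \<notin> S" using trk_Res[OF t] Res False by auto
      have "Path i' 0 \<notin> S" using trk_Path[OF t] False by auto
      hence "nxt S v (Path i' 0) = S" using vS unfolding nxt_def by auto
      thus ?thesis using cR Res False by (simp add: lbX_Res2)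
    qed
  next
    case (Path i' j)
    have ij: "i' < l" "j < k" using v Path by (auto simp: inV)
    show ?thesis
    proof (cases "i' = i")
      case False
      have vS: "v \<notin> S" using trk_Path[OF t] Path False by auto
      show ?thesis
      proof (cases "Suc j < k")
        case True
        have "Path i' (Suc j) \<notin> S" using trk_Path[OF t] False by auto
        hence "nxt S v (Path i' (Suc j)) = S" using vS unfolding nxt_def by auto
        moreover have "j \<noteq> k - 1" using True by simp
        ultimately show ?thesis using contrib_Path1[OF ij(1) True] Path False True ij by (simp add: lbX_Path2)
      next
        case nk: False
        hence jk: "Suc j = k" using ij by simp
        have cP: "contrib k l m r u S v = fit r S v * (u (nxt S v Centre) - u S)"
          using contrib_Path2[OF ij(1) jk] Path by simp
        show ?thesis
        proof (cases "Centre \<in> S")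
          case True
          have "u (S - {Centre}) \<ge> LX S + \<delta>"
            using uXd[OF t xS, of Centre] LX_delC[OF True] by simp
          hence "contrib k l m r u S v \<ge> \<delta>" using cP vS uS unfolding fit_def nxt_def by simp
          moreover have "lbX S v = \<delta>" using Path False ij jk True by (simp add: lbX_Path2)
          ultimately show ?thesis by simp
        next
          case nC: False
          hence "nxt S v Centre = S" using vS unfolding nxt_def by auto
          moreover have "lbX S v = 0" using Path False ij jk nC by (simp add: lbX_Path2)
          ultimately show ?thesis using cP by simp
        qed
      qed
    next
      case True
      hence vP: "v = Path i j" using Path by simp
      let ?t5 = "(if j = 0 then (if 0 \<in> Bof S \<and> Suc 0 < k then - r * \<beta> * k else 0) else 0)"
      let ?t6 = "(if j = k - 1 then (if k - 1 \<in> Bof S \<and> Centre \<notin> S then - r * \<delta> else 0) else 0)"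
      let ?t7 = "(if j = lf1 k (Bof S) - 1 then (if 0 \<notin> Bof S \<and> Bof S - {0} \<noteq> {} then \<beta> else 0) else 0)"
      have lbv: "lbX S v = ?t5 + ?t6 + ?t7" using vP by (simp add: lbX_Path)
      have t5n: "?t5 \<le> 0" "?t5 \<ge> - r * \<beta> * k" using pr r by auto
      show ?thesis
      proof (cases "j \<in> Bof S")
        case jB: True
        have vS: "v \<in> S" using jB vP unfolding Bof_def by simp
        have t7: "?t7 = 0" by (rule term7_zero[OF t jB])
        show ?thesis
        proof (cases "Suc j < k")
          case jk: True
          have t6: "?t6 = 0" using jk by auto
          have cP: "contrib k l m r u S v = r * (u (insert (Path i (Suc j)) S) - LX S)"
            using contrib_Path1[OF i jk] vP vS uS by (simp add: fit_def nxt_def)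
          show ?thesis
          proof (cases "j = 0")
            case True
            have "LX (insert (Path i (Suc j)) S) \<ge> LX S - \<beta> * k"
              by (rule LX_any[OF t trk_ins_Path[OF t jk]]) (auto simp: Bof_simps True)
            moreover have "LX (insert (Path i (Suc j)) S) \<le> u (insert (Path i (Suc j)) S)"
              using uX[OF trk_ins_Path[OF t jk]] xS by simp
            ultimately have "r * (- \<beta> * k) \<le> r * (u (insert (Path i (Suc j)) S) - LX S)" by (intro ml) simp
            hence c: "contrib k l m r u S v \<ge> r * (- \<beta> * k)" using cP by simp
            have "?t5 = - r * \<beta> * k" using True jB jk by simp
            hence "lbX S v = r * (- \<beta> * k)" using lbv t6 t7 by simp
            thus ?thesis using c by simp
          next
            case False
            have "LX (insert (Path i (Suc j)) S) = LX S" by (rule LX_fwd[OF t jB False jk])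
            moreover have "LX (insert (Path i (Suc j)) S) \<le> u (insert (Path i (Suc j)) S)"
              using uX[OF trk_ins_Path[OF t jk]] xS by simp
            ultimately have "contrib k l m r u S v \<ge> 0" using cP r by simp
            thus ?thesis using lbv t6 t7 t5n by simp
          qed
        next
          case False
          hence jk: "Suc j = k" using ij by simp
          have t5: "?t5 = 0" using jk by auto
          have cP: "contrib k l m r u S v = r * (u (insert Centre S) - LX S)"
            using contrib_Path2[OF i jk] vP vS uS by (simp add: fit_def nxt_def)
          show ?thesis
          proof (cases "Centre \<in> S")
            case True
            hence "insert Centre S = S" by auto
            thus ?thesis using cP uS lbv t5 t7 True by simp
          next
            case nC: False
            have "u (insert Centre S) \<ge> LX S - \<delta>"
              using uX[OF trk_ins_C[OF t]] xS LX_insC[OF nC] by simp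
            hence "r * (- \<delta>) \<le> r * (u (insert Centre S) - LX S)" by (intro ml) simp
            hence "contrib k l m r u S v \<ge> r * (- \<delta>)" using cP by simp
            moreover have "?t6 = - r * \<delta>" using jk jB nC by auto
            ultimately show ?thesis using lbv t5 t7 by simp
          qed
        qed
      next
        case jB: False
        have vS: "v \<notin> S" using jB vP unfolding Bof_def by simp
        have t5: "?t5 = 0" using jB by auto
        have t6: "?t6 = 0" using jB by auto
        show ?thesis
        proof (cases "Suc j < k")
          case jk: True
          have cP: "contrib k l m r u S v = u (S - {Path i (Suc j)}) - LX S"
            using contrib_Path1[OF i jk] vP vS uS by (simp add: fit_def nxt_def)
          have base: "u (S - {Path i (Suc j)}) \<ge> LX S"
            using uXd[OF t xS, of "Path i (Suc j)"] LX_del[OF t, of "Suc j"] by simp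
          show ?thesis
          proof (cases "j = lf1 k (Bof S) - 1 \<and> 0 \<notin> Bof S \<and> Bof S - {0} \<noteq> {}")
            case True
            have e: "Suc j = lf1 k (Bof S)" using True lf1_ge1[OF Bk k] by simp
            have ne: "Bof S - {0} \<noteq> {}" using True by blast
            have a: "LX S + \<beta> \<le> LX (S - {Path i (lf1 k (Bof S))})" by (rule LX_del_min[OF t ne])
            have b: "LX (S - {Path i (Suc j)}) \<le> u (S - {Path i (Suc j)})" by (rule uXd[OF t xS]) simp
            have "u (S - {Path i (Suc j)}) \<ge> LX S + \<beta>" using a b unfolding e by simp
            hence c: "contrib k l m r u S v \<ge> \<beta>" using cP by simp
            have "?t7 = \<beta>" using True by (simp only: if_True simp_thms)
            hence "lbX S v = \<beta>" using lbv t5 t6 by simp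
            thus ?thesis using c by simp
          next
            case False
            hence "?t7 = 0" by auto
            thus ?thesis using cP base lbv t5 t6 by simp
          qed
        next
          case False
          hence jk: "Suc j = k" using ij by simp
          have t7: "?t7 = 0"
          proof (cases "Bof S - {0} \<noteq> {}")
            case True
            have "lf1 k (Bof S) < k" using lf1_in[OF Bk True] by simp
            moreover have "1 \<le> lf1 k (Bof S)" by (rule lf1_ge1[OF Bk k])
            ultimately have "j \<noteq> lf1 k (Bof S) - 1" using jk by linarith
            thus ?thesis by simp
          next
            case False thus ?thesis by auto
          qed
          have cP: "contrib k l m r u S v = u (S - {Centre}) - LX S"
            using contrib_Path2[OF i jk] vP vS uS by (simp add: fit_def nxt_def)
          have "u (S - {Centre}) \<ge> LX S"
          proof (cases "Centre \<in> S")
            case True thus ?thesis using uXd[OF t xS, of Centre] LX_delC[OF True] pr by simp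
          next
            case False hence "S - {Centre} = S" by auto
            thus ?thesis using uS by simp
          qed
          thus ?thesis using cP lbv t5 t6 t7 by simp
        qed
      qed
    qed
  qed
qed


definition lbB :: "ss_vertex set \<Rightarrow> ss_vertex \<Rightarrow> real" where
  "lbB S v =
     (if v = Centre then (if Centre \<in> S then - r else 0) else 0)
   + (if v = x then (if 0 \<in> Bof S then \<theta> * r else 0) else 0)
   + (if v \<in> FamE then (if Centre \<in> S then \<theta> else 0) else 0)
   + (if v = Path i (k - 1) then (if k - 1 \<in> Bof S \<and> Centre \<notin> S then - r * \<theta> else 0) else 0)
   + (if v = Path i (lf k (Bof S) - 1) then (if Bof S \<noteq> {} \<and> 0 \<notin> Bof S then \<theta> * r else 0) else 0)"

lemma lbB_nonneg: assumes t: "trk S" shows "0 \<le> (\<Sum>v\<in>VV. lbB S v)"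
proof -
  have CV: "Centre \<in> VV" by (simp add: inV)
  have xV: "x \<in> VV" using i a0 by (simp add: inV)
  have PkV: "Path i (k - 1) \<in> VV" using i k by (simp add: inV)
  have "lf k (Bof S) - 1 < k" using lf_le[OF Bof_sub[OF t]] k by simp
  hence PlV: "Path i (lf k (Bof S) - 1) \<in> VV" using i by (simp add: inV)
  have sum: "(\<Sum>v\<in>VV. lbB S v) =
     (if Centre \<in> S then - r else 0) + (if 0 \<in> Bof S then \<theta> * r else 0)
   + (if Centre \<in> S then \<theta> else 0) * (l - 1)
   + (if k - 1 \<in> Bof S \<and> Centre \<notin> S then - r * \<theta> else 0)
   + (if Bof S \<noteq> {} \<and> 0 \<notin> Bof S then \<theta> * r else 0)"
    unfolding lbB_def sum.distrib
    using sum_delta_V[OF CV] sum_delta_V[OF xV] sum_delta_V[OF PkV] sum_delta_V[OF PlV]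
      sum_fam_V[OF FamE_sub] card_FamE l2
    by (simp add: of_nat_diff mult.commute)
  have pos: "0 < \<theta>" using params by simp
  have A: "(if Centre \<in> S then - r else 0) + (if Centre \<in> S then \<theta> else 0) * (l - 1) = 0"
    using \<theta>l l2 by (simp add: of_nat_diff mult.commute)
  have B: "(if 0 \<in> Bof S then \<theta> * r else 0) + (if k - 1 \<in> Bof S \<and> Centre \<notin> S then - r * \<theta> else 0)
     + (if Bof S \<noteq> {} \<and> 0 \<notin> Bof S then \<theta> * r else 0) \<ge> 0"
    using pos r by (auto simp: mult.commute)
  show ?thesis unfolding sum using A B by linarith
qed

lemma uBd: "trk S \<Longrightarrow> x \<notin> S \<Longrightarrow> LB (S - {w}) \<le> u (S - {w})"
  using uB[OF trk_del, of S w] by simp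

lemma lbB_Path: "lbB S (Path i j) =
     (if j = k - 1 then (if k - 1 \<in> Bof S \<and> Centre \<notin> S then - r * \<theta> else 0) else 0)
   + (if j = lf k (Bof S) - 1 then (if Bof S \<noteq> {} \<and> 0 \<notin> Bof S then \<theta> * r else 0) else 0)"
  unfolding lbB_def FamE_def by auto
lemma lbB_Path2: "i' \<noteq> i \<Longrightarrow> i' < l \<Longrightarrow> lbB S (Path i' j) = (if j = k - 1 then (if Centre \<in> S then \<theta> else 0) else 0)"
  unfolding lbB_def FamE_def by auto
lemma lbB_Res: "(i', a) \<noteq> (i, a0) \<Longrightarrow> lbB S (Res i' a) = 0"
  unfolding lbB_def FamE_def by auto
lemma lbB_x: "lbB S x = (if 0 \<in> Bof S then \<theta> * r else 0)"
  unfolding lbB_def FamE_def by auto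
lemma lbB_Centre: "lbB S Centre = (if Centre \<in> S then - r else 0)"
  unfolding lbB_def FamE_def by auto

lemma contribB:
  assumes t: "trk S" and xS: "x \<notin> S" and pos: "0 < LB S" and v: "v \<in> VV"
  shows "contrib k l m r u S v \<ge> lbB S v"
proof -
  have uS: "u S = LB S" using u_eq_L[OF t] pos xS unfolding L_def by simp
  have LB1: "LB S \<le> 1" by (rule LB_le[OF t])
  have pr: "0 < \<theta>" using params by auto
  have Bk: "Bof S \<subseteq> {..<k}" by (rule Bof_sub[OF t])
  have noRes: "\<And>i' a. Res i' a \<notin> S" using trk_Res[OF t] xS by blast
  show ?thesis
  proof (cases v)
    case Centre
    show ?thesis
    proof (cases "Centre \<in> S")
      case True
      have "(\<Sum>w\<in>resset l m. u (nxt S Centre w) - u S) \<ge> (\<Sum>w\<in>resset l m. - 1)"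
        using uS u_nonneg LB1 by (intro sum_mono) (smt (verit))
      also have "(\<Sum>w\<in>resset l m. - 1) = - real (l * m)" by (simp add: card_resset)
      finally have h: "(\<Sum>w\<in>resset l m. u (nxt S Centre w) - u S) \<ge> - real (l * m)" .
      have lm: "real (l * m) > 0" using l2 m2 by simp
      have "contrib k l m r u S v = r / (l * m) * (\<Sum>w\<in>resset l m. u (nxt S Centre w) - u S)"
        using Centre True by (simp add: contrib_Centre fit_def)
      also have "\<dots> \<ge> r / (l * m) * (- real (l * m))" using h r lm by (intro mult_left_mono) auto
      also have "r / (l * m) * (- real (l * m)) = - r"
      proof -
        have "real (l * m) \<noteq> 0" using l2 m2 by simp
        thus ?thesis by simp
      qed
      finally show ?thesis using Centre True by (simp add: lbB_Centre)
    next
      case False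
      have "\<And>w. w \<in> resset l m \<Longrightarrow> nxt S Centre w = S"
        using False noRes unfolding nxt_def resset_def by auto
      hence "contrib k l m r u S v = 0" using Centre by (simp add: contrib_Centre)
      thus ?thesis using Centre False by (simp add: lbB_Centre)
    qed
  next
    case (Res i' a)
    have ia: "i' < l" "a < m" using v Res by (auto simp: inV)
    have vS: "v \<notin> S" using noRes Res by simp
    have cR: "contrib k l m r u S v = u (S - {Path i' 0}) - LB S"
      using Res contrib_Res[OF ia k] vS uS by (simp add: fit_def nxt_def)
    show ?thesis
    proof (cases "i' = i \<and> 0 \<in> Bof S")
      case True
      have base: "u (S - {Path i 0}) \<ge> LB S" using uBd[OF t xS] LB_del[OF t] by (meson order_trans)
      show ?thesis
      proof (cases "a = a0")
        case True
        have ne: "Bof S \<noteq> {}" using \<open>i' = i \<and> 0 \<in> Bof S\<close> by auto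
        have "lf k (Bof S) = 0" using lf_min[OF Bk] \<open>i' = i \<and> 0 \<in> Bof S\<close> by fastforce
        hence "LB (S - {Path i 0}) \<ge> LB S + \<theta> * r" using LB_del_min[OF t ne] by simp
        hence "u (S - {Path i 0}) \<ge> LB S + \<theta> * r" using uBd[OF t xS, of "Path i 0"] by simp
        thus ?thesis using cR Res True \<open>i' = i \<and> 0 \<in> Bof S\<close> by (simp add: lbB_x)
      next
        case False
        thus ?thesis using cR base Res True by (simp add: lbB_Res)
      qed
    next
      case False
      have "Path i' 0 \<notin> S" using False trk_Path[OF t] unfolding Bof_def by auto
      hence "S - {Path i' 0} = S" by auto
      hence c0: "contrib k l m r u S v = 0" using cR uS by simp
      have "lbB S v = 0" using False Res by (cases "i' = i \<and> a = a0") (auto simp: lbB_x lbB_Res)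
      thus ?thesis using c0 by simp
    qed
  next
    case (Path i' j)
    have ij: "i' < l" "j < k" using v Path by (auto simp: inV)
    show ?thesis
    proof (cases "i' = i")
      case False
      have vS: "v \<notin> S" using trk_Path[OF t] Path False by auto
      show ?thesis
      proof (cases "Suc j < k")
        case True
        have "Path i' (Suc j) \<notin> S" using trk_Path[OF t] False by auto
        hence "nxt S v (Path i' (Suc j)) = S" using vS unfolding nxt_def by auto
        moreover have "lbB S v = 0" using Path False ij True by (simp add: lbB_Path2)
        ultimately show ?thesis using contrib_Path1[OF ij(1) True] Path by simp
      next
        case nk: False
        hence jk: "Suc j = k" using ij by simp
        have cP: "contrib k l m r u S v = u (S - {Centre}) - LB S"
          using contrib_Path2[OF ij(1) jk] Path vS uS by (simp add: fit_def nxt_def)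
        show ?thesis
        proof (cases "Centre \<in> S")
          case True
          have "u (S - {Centre}) \<ge> LB S + \<theta>" using uBd[OF t xS, of Centre] LB_delC[OF True] by simp
          moreover have "lbB S v = \<theta>" using Path False ij jk True by (simp add: lbB_Path2)
          ultimately show ?thesis using cP by simp
        next
          case nC: False
          hence "S - {Centre} = S" by auto
          moreover have "lbB S v = 0" using Path False ij jk nC by (simp add: lbB_Path2)
          ultimately show ?thesis using cP uS by simp
        qed
      qed
    next
      case True
      hence vP: "v = Path i j" using Path by simp
      let ?t4 = "(if j = k - 1 then (if k - 1 \<in> Bof S \<and> Centre \<notin> S then - r * \<theta> else 0) else 0)"
      let ?t5 = "(if j = lf k (Bof S) - 1 then (if Bof S \<noteq> {} \<and> 0 \<notin> Bof S then \<theta> * r else 0) else 0)"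
      have lbv: "lbB S v = ?t4 + ?t5" using vP by (simp add: lbB_Path)
      show ?thesis
      proof (cases "j \<in> Bof S")
        case jB: True
        have vS: "v \<in> S" using jB vP unfolding Bof_def by simp
        have t5: "?t5 = 0"
        proof (cases "Bof S \<noteq> {} \<and> 0 \<notin> Bof S \<and> j = lf k (Bof S) - 1")
          case True
          have "lf k (Bof S) \<le> j" by (rule lf_min[OF Bk jB])
          moreover have "lf k (Bof S) \<noteq> 0" using lf_in[OF Bk] True by fastforce
          ultimately show ?thesis using True by simp
        next
          case False thus ?thesis by auto
        qed
        show ?thesis
        proof (cases "Suc j < k")
          case jk: True
          have t4: "?t4 = 0" using jk by auto
          have "contrib k l m r u S v = r * (u (insert (Path i (Suc j)) S) - LB S)"
            using contrib_Path1[OF i jk] vP vS uS by (simp add: fit_def nxt_def)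
          moreover have "u (insert (Path i (Suc j)) S) \<ge> LB S"
            using uB[OF trk_ins_Path[OF t jk]] xS LB_fwd[OF t jB] by simp
          ultimately have "contrib k l m r u S v \<ge> 0" using r by simp
          thus ?thesis using lbv t4 t5 by simp
        next
          case False
          hence jk: "Suc j = k" using ij by simp
          have cP: "contrib k l m r u S v = r * (u (insert Centre S) - LB S)"
            using contrib_Path2[OF i jk] vP vS uS by (simp add: fit_def nxt_def)
          show ?thesis
          proof (cases "Centre \<in> S")
            case True
            hence "insert Centre S = S" by auto
            moreover have "?t4 = 0" using True by simp
            ultimately show ?thesis using cP uS lbv t5 by simp
          next
            case nC: False
            have "u (insert Centre S) \<ge> LB S - \<theta>"
              using uB[OF trk_ins_C[OF t]] xS LB_insC[OF nC] by simp
            hence "r * (- \<theta>) \<le> r * (u (insert Centre S) - LB S)" by (intro ml) simp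
            moreover have "?t4 = - r * \<theta>" using jk jB nC by auto
            ultimately show ?thesis using cP lbv t5 by simp
          qed
        qed
      next
        case jB: False
        have vS: "v \<notin> S" using jB vP unfolding Bof_def by simp
        have t4: "?t4 = 0" using jB by auto
        show ?thesis
        proof (cases "Suc j < k")
          case jk: True
          have cP: "contrib k l m r u S v = u (S - {Path i (Suc j)}) - LB S"
            using contrib_Path1[OF i jk] vP vS uS by (simp add: fit_def nxt_def)
          have base: "u (S - {Path i (Suc j)}) \<ge> LB S"
            using uBd[OF t xS, of "Path i (Suc j)"] LB_del[OF t, of "Suc j"] by simp
          show ?thesis
          proof (cases "Bof S \<noteq> {} \<and> 0 \<notin> Bof S \<and> j = lf k (Bof S) - 1")
            case True
            have ne: "Bof S \<noteq> {}" using True by simp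
            have "lf k (Bof S) \<noteq> 0" using lf_in[OF Bk ne] True by fastforce
            hence e: "Suc j = lf k (Bof S)" using True by simp
            have a: "LB S + \<theta> * r \<le> LB (S - {Path i (lf k (Bof S))})" by (rule LB_del_min[OF t ne])
            have b: "LB (S - {Path i (Suc j)}) \<le> u (S - {Path i (Suc j)})" by (rule uBd[OF t xS])
            have c: "contrib k l m r u S v \<ge> \<theta> * r" using a b cP unfolding e by simp
            have "?t5 = \<theta> * r" using True by (simp only: if_True simp_thms)
            thus ?thesis using c lbv t4 by simp
          next
            case False
            hence "?t5 = 0" by auto
            thus ?thesis using cP base lbv t4 by simp
          qed
        next
          case False
          hence jk: "Suc j = k" using ij by simp
          have t5: "?t5 = 0"
          proof (cases "Bof S \<noteq> {}")
            case True
            have "lf k (Bof S) \<in> Bof S" by (rule lf_in[OF Bk True])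
            have lk: "lf k (Bof S) < k" using Bk \<open>lf k (Bof S) \<in> Bof S\<close> by auto
            have "j \<noteq> lf k (Bof S) - 1"
            proof
              assume e: "j = lf k (Bof S) - 1"
              show False
              proof (cases "lf k (Bof S) = 0")
                case True thus False using e jB \<open>lf k (Bof S) \<in> Bof S\<close> by simp
              next
                case False thus False using e lk jk by simp
              qed
            qed
            thus ?thesis by simp
          next
            case False thus ?thesis by auto
          qed
          have cP: "contrib k l m r u S v = u (S - {Centre}) - LB S"
            using contrib_Path2[OF i jk] vP vS uS by (simp add: fit_def nxt_def)
          have "u (S - {Centre}) \<ge> LB S"
          proof (cases "Centre \<in> S")
            case True thus ?thesis using uBd[OF t xS, of Centre] LB_delC[OF True] pr by simp
          next
            case False hence "S - {Centre} = S" by auto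
            thus ?thesis using uS by simp
          qed
          thus ?thesis using cP lbv t4 t5 by simp
        qed
      qed
    qed
  qed
qed


lemma potC: "\<alpha> \<le> extinction_prob VV (superstar_E k l m) r {x}"
proof -
  have l0: "0 < l" using i by simp
  have m0: "0 < m" using a0 by simp
  have r0: "0 < r" using r by simp
  have g: "good VV (superstar_E k l m) r" by (rule good_ss[OF k l0 m0 r0])
  have Bof_e: "Bof {} = {}" "Bof {x} = {}" unfolding Bof_def by auto
  have trk_e: "trk {}" unfolding trk_def by simp
  have trk_x: "trk {x}" unfolding trk_def using i a0 by (simp add: inV)
  have ux: "u {x} = \<alpha>"
  proof -
    have "LX {x} = \<alpha>" unfolding LX_def Bof_e lf1_def by (simp add: ind_def)
    thus ?thesis using trk_x params unfolding u_def L_def by simp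
  qed
  have "u {x} \<le> extinction_prob VV (superstar_E k l m) r {x}"
  proof (rule ext_lower[OF g])
    show "\<And>S. S \<subseteq> VV \<Longrightarrow> S \<noteq> {} \<Longrightarrow> \<not> VV \<subseteq> S \<Longrightarrow> \<exists>v\<in>S. \<exists>w\<in>outs (superstar_E k l m) v. w \<notin> S"
      by (rule strong_ss[OF k m0])
    show "\<And>S. 0 \<le> u S" by (rule u_nonneg)
    have "LB {} = 1" unfolding LB_def Bof_e lf_def by (simp add: ind_def)
    thus "u {} \<le> 1" using trk_e unfolding u_def L_def by simp
    have "\<not> trk VV"
    proof
      assume "trk VV"
      moreover have "Res i (if a0 = 0 then 1 else 0) \<in> VV" using i m2 by (simp add: inV)
      ultimately show False unfolding trk_def by (auto split: if_splits)
    qed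
    thus "u VV = 0" unfolding u_def by simp
    show "{x} \<subseteq> VV" using i a0 by (simp add: inV)
    fix S assume S: "S \<subseteq> VV" "S \<noteq> {}" "\<not> VV \<subseteq> S" "0 < u S"
    have t: "trk S" using S(4) unfolding u_def by (auto split: if_splits)
    have L0: "0 < L S" using S(4) t unfolding u_def by auto
    show "0 \<le> drift VV (superstar_E k l m) r u S"
    proof (cases "x \<in> S")
      case True
      have p: "0 < LX S" using L0 True unfolding L_def by simp
      have "drift VV (superstar_E k l m) r u S \<ge> (\<Sum>v\<in>VV. lbX S v)"
        by (rule drift_ge_lb) (rule contribX[OF t True p])
      thus ?thesis using lbX_nonneg[OF t] by linarith
    next
      case False
      have p: "0 < LB S" using L0 False unfolding L_def by simp
      have "drift VV (superstar_E k l m) r u S \<ge> (\<Sum>v\<in>VV. lbB S v)"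
        by (rule drift_ge_lb) (rule contribB[OF t False p])
      thus ?thesis using lbB_nonneg[OF t] by linarith
    qed
  qed
  thus ?thesis using ux by simp
qed

end

lemma potC_global:
  assumes "0 < k" "1 < r" "i < l" "a0 < m" "4 * r \<le> real m - 1" "2 * r * (r * k + 1) \<le> real l - 1"
  shows "1 / (64 * r^3 * (r * k + 1)) \<le> extinction_prob (superstar_V k l m) (superstar_E k l m) r {Res i a0}"
proof -
  interpret CC k l m r i a0 using assms by unfold_locales
  show ?thesis using potC unfolding \<alpha>_def .
qed


lemma cube_bound:
  fixes T c X Y Z L M :: real
  assumes c: "0 < c" and L: "1 \<le> L" and M: "1 \<le> M" and K: "K > 0"
    and hX: "c * (L * K) \<le> T" and hY: "c * M \<le> T" and hZ: "c * (L * M / K) \<le> T"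
  shows "c^3 * (L * M)^2 \<le> T^3"
proof -
  have "0 \<le> c * M" using c M by simp
  hence T0: "0 \<le> T" using hY by linarith
  have "(c * (L * K)) * (c * (L * M / K)) \<le> T * T"
    using hX hZ c L M K T0 by (intro mult_mono) (auto intro!: mult_nonneg_nonneg divide_nonneg_nonneg)
  moreover have "(c * (L * K)) * (c * (L * M / K)) = c^2 * (L^2 * M)"
    using K by (simp add: field_simps power2_eq_square)
  ultimately have T2: "c^2 * (L^2 * M) \<le> T^2" by (simp add: power2_eq_square)
  show ?thesis
  proof (cases "M \<le> L^2")
    case True
    have "(c^2 * (L^2 * M)) * (c * M) \<le> T^2 * T"
      using T2 hY c M by (intro mult_mono) auto
    moreover have "(c^2 * (L^2 * M)) * (c * M) = c^3 * (L * M)^2"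
      by (simp add: power2_eq_square power3_eq_cube algebra_simps)
    ultimately show ?thesis by (simp add: power2_eq_square power3_eq_cube algebra_simps)
  next
    case False
    have "(c * M)^3 \<le> T^3" using hY c M by (intro power_mono) auto
    moreover have "c^3 * (L * M)^2 \<le> (c * M)^3"
    proof -
      have "L^2 * M^2 \<le> M * M^2" using False by (intro mult_right_mono) auto
      hence "c^3 * (L^2 * M^2) \<le> c^3 * (M * M^2)" using c by (intro mult_left_mono) auto
      thus ?thesis by (simp add: power2_eq_square power3_eq_cube algebra_simps)
    qed
    ultimately show ?thesis by linarith
  qed
qed

lemma core:
  fixes K L M T r g :: real
  assumes r: "1 < r" and K: "1 \<le> K" and L: "1 \<le> L" and M: "1 \<le> M"
    and T: "L * K / (1 + r) + L * M * g \<le> T" and g: "0 \<le> g"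
    and gb: "4 * r \<le> M - 1 \<Longrightarrow> 1 / (3 * r^2 * L) \<le> g \<and> 1 / (128 * r^4 * K) \<le> g"
  shows "(L * (K + M) + 1) powr (2/3) / ((1 + r) * (3 + 4 * r) + 384 * r^4) \<le> T"
proof -
  define n where "n = L * (K + M) + 1"
  define C where "C = (1 + r) * (3 + 4 * r) + 384 * r^4"
  have n1: "1 \<le> n" unfolding n_def using K L M by (simp add: add_nonneg_nonneg)
  have C0: "0 < C" unfolding C_def using r by (simp add: add_pos_pos)
  have "1 * 1 \<le> L * K" using K L by (intro mult_mono) auto
  hence LK1: "1 \<le> L * K" by simp
  have "1 * 1 \<le> L * M" using M L by (intro mult_mono) auto
  hence LM1: "1 \<le> L * M" by simp
  have r4: "1 \<le> r^4" using r by (simp add: one_le_power)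
  have LMg: "0 \<le> L * M * g" using L M g by simp
  have TP: "L * K / (1 + r) \<le> T" using T LMg by linarith
  have npow: "n powr (2/3) \<le> n"
  proof -
    have "n powr (2/3) \<le> n powr 1" using n1 by (intro powr_mono) auto
    thus ?thesis using n1 by simp
  qed
  have main: "n powr (2/3) / C \<le> T"
  proof (cases "M \<le> K \<or> M - 1 < 4 * r")
    case True
    have nb: "n \<le> (3 + 4 * r) * (L * K)"
    proof (cases "M \<le> K")
      case True
      have "n \<le> L * (K + K) + 1" unfolding n_def using True L by (simp add: mult_left_mono)
      also have "\<dots> \<le> 3 * (L * K)" using LK1 by (simp add: algebra_simps)
      also have "\<dots> \<le> (3 + 4 * r) * (L * K)" using r LK1 by (intro mult_right_mono) auto
      finally show ?thesis .
    next
      case False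
      hence Mr: "M \<le> 4 * r + 1" using \<open>M \<le> K \<or> M - 1 < 4 * r\<close> by linarith
      have "n = L * K + L * M + 1" unfolding n_def by (simp add: algebra_simps)
      also have "L * M \<le> L * (4 * r + 1)" using Mr L by (intro mult_left_mono) auto
      also have "L \<le> L * K" using L K by (metis mult_le_cancel_left1 less_le_not_le order_trans zero_le_one mult_1_right)
      hence "L * (4 * r + 1) \<le> (L * K) * (4 * r + 1)" using r by (intro mult_right_mono) auto
      finally have "n \<le> L * K + (L * K) * (4 * r + 1) + L * K" using LK1 by linarith
      thus ?thesis by (simp add: algebra_simps)
    qed
    have "n / C \<le> n / ((1 + r) * (3 + 4 * r))"
      using n1 r C0 unfolding C_def by (intro divide_left_mono) (auto intro!: mult_pos_pos)
    also have "\<dots> \<le> L * K / (1 + r)"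
      using nb r by (simp add: divide_simps mult.commute mult.left_commute)
    finally have "n / C \<le> T" using TP by linarith
    moreover have "n powr (2/3) / C \<le> n / C" using npow C0 by (intro divide_right_mono) auto
    ultimately show ?thesis by linarith
  next
    case False
    hence KM: "K < M" and Mr: "4 * r \<le> M - 1" by auto
    define c where "c = 1 / (128 * r^4)"
    have c0: "0 < c" unfolding c_def using r by simp
    have g1: "1 / (3 * r^2 * L) \<le> g" and g2: "1 / (128 * r^4 * K) \<le> g" using gb[OF Mr] by auto
    have LK0: "0 \<le> L * K / (1 + r)" using L K r by simp
    have hX: "c * (L * K) \<le> T"
    proof -
      have "r^1 \<le> r^4" using r by (intro power_increasing) auto
      hence "1 + r \<le> 128 * r^4" using r r4 by simp
      hence "c \<le> 1 / (1 + r)" unfolding c_def using r by (intro divide_left_mono) auto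
      hence "c * (L * K) \<le> (1 / (1 + r)) * (L * K)" using LK1 by (intro mult_right_mono) auto
      hence "c * (L * K) \<le> L * K / (1 + r)" by simp
      thus ?thesis using TP by linarith
    qed
    have hY: "c * M \<le> T"
    proof -
      have "L * M * (1 / (3 * r^2 * L)) \<le> L * M * g" using g1 L M by (intro mult_left_mono) auto
      moreover have "L * M * (1 / (3 * r^2 * L)) = M / (3 * r^2)" using L by simp
      moreover have "c * M \<le> M / (3 * r^2)"
      proof -
        have "3 * r^2 \<le> 128 * r^4"
        proof -
          have "r^2 \<le> r^4" using r by (intro power_increasing) auto
          moreover have "0 \<le> r^2" by simp
          ultimately show ?thesis by linarith
        qed
        hence "c \<le> 1 / (3 * r^2)" unfolding c_def using r by (intro divide_left_mono) auto
        hence "c * M \<le> (1 / (3 * r^2)) * M" using M by (intro mult_right_mono) auto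
        thus ?thesis by simp
      qed
      ultimately show ?thesis using T LK0 by linarith
    qed
    have hZ: "c * (L * M / K) \<le> T"
    proof -
      have "L * M * (1 / (128 * r^4 * K)) \<le> L * M * g" using g2 L M by (intro mult_left_mono) auto
      moreover have "L * M * (1 / (128 * r^4 * K)) = c * (L * M / K)" unfolding c_def by simp
      moreover have "0 \<le> L * K / (1 + r)" using L K r by simp
      ultimately show ?thesis using T by linarith
    qed
    have cube: "c^3 * (L * M)^2 \<le> T^3" by (rule cube_bound[OF c0 L M _ hX hY hZ]) (use K in simp)
    have nLM: "n \<le> 3 * (L * M)"
    proof -
      have "n \<le> L * (M + M) + 1" unfolding n_def using KM L by (simp add: mult_left_mono)
      thus ?thesis using LM1 by (simp add: algebra_simps)
    qed
    have "0 \<le> c * M" using c0 M by simp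
    hence T0: "0 \<le> T" using hY by linarith
    have "n powr (2/3) * c / 3 \<le> T"
    proof (rule ccontr)
      assume "\<not> ?thesis"
      hence lt: "T < n powr (2/3) * c / 3" by simp
      have "T^3 < (n powr (2/3) * c / 3)^3" using lt T0 by (intro power_strict_mono) auto
      also have "(n powr (2/3) * c / 3)^3 = (n powr (2/3))^3 * c^3 / 27" by (simp add: power_mult_distrib power_divide)
      also have "(n powr (2/3))^3 = n^2"
      proof -
        have p: "0 < n powr (2/3)" using n1 by simp
        have "(n powr (2/3))^3 = (n powr (2/3)) powr (real 3)" using powr_realpow[OF p, of 3] by simp
        also have "\<dots> = n powr (2/3 * real 3)" by (simp only: powr_powr)
        also have "\<dots> = n powr (real 2)" by simp
        also have "\<dots> = n^2" using powr_realpow[of n 2] n1 by simp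
        finally show ?thesis .
      qed
      also have "n^2 * c^3 / 27 \<le> (3 * (L * M))^2 * c^3 / 27"
        using nLM n1 c0 by (intro divide_right_mono mult_right_mono power_mono) auto
      also have "(3 * (L * M))^2 * c^3 / 27 = (c^3 * (L * M)^2) / 3" by (simp add: power2_eq_square)
      also have "\<dots> \<le> T^3 / 3" using cube by simp
      finally have "T^3 < T^3 / 3" .
      moreover have "0 \<le> T^3" using T0 by simp
      ultimately show False by linarith
    qed
    moreover have "n powr (2/3) / C \<le> n powr (2/3) * c / 3"
    proof -
      have "3 / c \<le> C" unfolding c_def C_def using r by (simp add: add_nonneg_nonneg mult_nonneg_nonneg)
      hence "1 / C \<le> c / 3" using c0 C0 by (simp add: divide_simps mult.commute)
      hence "n powr (2/3) * (1 / C) \<le> n powr (2/3) * (c / 3)" by (intro mult_left_mono) auto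
      thus ?thesis by simp
    qed
    ultimately show ?thesis by linarith
  qed
  thus ?thesis unfolding n_def C_def .
qed


lemma res_bound1:
  assumes k: "0 < k" and l: "0 < l" and m: "0 < m" and r: "1 < r" and i: "i < l" and a: "a < m"
  shows "1 / (3 * r^2 * l) \<le> extinction_prob (superstar_V k l m) (superstar_E k l m) r {Res i a}"
proof -
  have "1 + l * r * (r + 1) \<le> 3 * r^2 * l"
  proof -
    have "r * (r + 1) \<le> 2 * r^2" using r by (simp add: power2_eq_square algebra_simps)
    hence "l * (r * (r + 1)) \<le> l * (2 * r^2)" by (intro mult_left_mono) auto
    moreover have "1 \<le> r^2 * l"
    proof -
      have "1 \<le> r^2" using r by (simp add: one_le_power)
      moreover have "1 \<le> real l" using l by simp
      ultimately have "1 * 1 \<le> r^2 * l" by (intro mult_mono) auto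
      thus ?thesis by simp
    qed
    ultimately show ?thesis by (simp add: algebra_simps)
  qed
  moreover have p1: "0 < 1 + real l * r * (r + 1)"
  proof -
    have "0 \<le> real l * r * (r + 1)" using r by simp
    thus ?thesis by simp
  qed
  moreover have p2: "0 < 3 * r^2 * real l" using r l by simp
  ultimately have "1 / (3 * r^2 * l) \<le> 1 / (1 + l * r * (r + 1))"
    using l by (intro divide_left_mono mult_pos_pos) auto
  thus ?thesis using potB[OF k l m _ i a] r by (meson order_trans less_trans zero_less_one)
qed

lemma res_bound2:
  assumes k: "0 < k" and l: "0 < l" and m: "0 < m" and r: "1 < r" and i: "i < l" and a: "a < m"
    and mr: "4 * r \<le> real m - 1"
  shows "1 / (128 * r^4 * k) \<le> extinction_prob (superstar_V k l m) (superstar_E k l m) r {Res i a}"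
proof -
  have K: "1 \<le> real k" using k by simp
  have rk1: "1 \<le> r * k"
  proof -
    have "1 * 1 \<le> r * k" using r K by (intro mult_mono) auto
    thus ?thesis by simp
  qed
  have r2: "r \<le> r^2" "r^2 \<le> r^3" "r^3 \<le> r^4"
    using power_increasing[of 1 2 r] power_increasing[of 2 3 r] power_increasing[of 3 4 r] r by auto
  show ?thesis
  proof (cases "2 * r * (r * k + 1) \<le> real l - 1")
    case True
    have f: "1 / (64 * r^3 * (r * k + 1)) \<le> extinction_prob (superstar_V k l m) (superstar_E k l m) r {Res i a}"
      by (rule potC_global[OF k r i a mr True])
    have "64 * r^3 * (r * k + 1) \<le> 128 * r^4 * k"
    proof -
      have "r * k + 1 \<le> 2 * (r * k)" using rk1 by simp
      hence "64 * r^3 * (r * k + 1) \<le> 64 * r^3 * (2 * (r * k))" using r by (intro mult_left_mono) auto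
      also have "\<dots> = 128 * r^4 * k" by (simp add: power_Suc algebra_simps power3_eq_cube power4_eq_xxxx)
      finally show ?thesis .
    qed
    hence "1 / (128 * r^4 * k) \<le> 1 / (64 * r^3 * (r * k + 1))"
      using r rk1 k by (intro divide_left_mono) (auto intro!: mult_pos_pos)
    thus ?thesis using f by linarith
  next
    case False
    hence L: "real l \<le> 2 * r * (r * k + 1) + 1" by simp
    have "3 * r^2 * l \<le> 128 * r^4 * k"
    proof -
      have "3 * r^2 * l \<le> 3 * r^2 * (2 * r * (r * k + 1) + 1)" using L r by (intro mult_left_mono) auto
      also have "\<dots> = 6 * (r^4 * k) + 6 * r^3 + 3 * r^2"
        by (simp add: algebra_simps power2_eq_square power3_eq_cube power4_eq_xxxx)
      also have "\<dots> \<le> 6 * (r^4 * k) + 6 * (r^4 * k) + 3 * (r^4 * k)"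
      proof -
        have "r^4 * 1 \<le> r^4 * k" using K r by (intro mult_left_mono) auto
        hence "r^3 \<le> r^4 * k" using r2 by simp
        moreover have "r^2 \<le> r^4 * k" using r2 \<open>r^3 \<le> r^4 * k\<close> by linarith
        ultimately show ?thesis by linarith
      qed
      also have "\<dots> \<le> 128 * r^4 * k" using r by simp
      finally show ?thesis .
    qed
    hence "1 / (128 * r^4 * k) \<le> 1 / (3 * r^2 * l)"
      using r l k by (intro divide_left_mono) (auto intro!: mult_pos_pos)
    thus ?thesis using res_bound1[OF k l m r i a] by linarith
  qed
qed


lemma card_PS: "card {Path i j | i j. i < l \<and> j < k} = l * k"
proof -
  have e2: "{Path i j | i j. i < l \<and> j < k} = (\<lambda>(i,j). Path i j) ` ({..<l} \<times> {..<k})" by auto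
  show ?thesis unfolding e2 by (subst card_image) (auto simp: inj_on_def)
qed

lemma sum_lower:
  assumes k: "0 < k" and l: "0 < l" and m: "0 < m" and r: "1 < r" and g: "0 \<le> g"
    and gR: "\<And>i a. i < l \<Longrightarrow> a < m \<Longrightarrow> g \<le> extinction_prob (superstar_V k l m) (superstar_E k l m) r {Res i a}"
  shows "l * k / (1 + r) + l * m * g \<le> (\<Sum>x\<in>superstar_V k l m. extinction_prob (superstar_V k l m) (superstar_E k l m) r {x})"
proof -
  let ?V = "superstar_V k l m" and ?E = "superstar_E k l m"
  define PS where "PS = {Path i j | i j. i < l \<and> j < k}"
  have PSV: "PS \<subseteq> ?V" unfolding PS_def by (auto simp: inV)
  have RV: "resset l m \<subseteq> ?V" unfolding V_eq by auto
  have gd: "good ?V ?E r" using good_ss[OF k l m] r by simp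
  have "(\<Sum>x\<in>?V. (if x \<in> PS then 1 / (1 + r) else 0) + (if x \<in> resset l m then g else 0))
      \<le> (\<Sum>x\<in>?V. extinction_prob ?V ?E r {x})"
  proof (rule sum_mono)
    fix x assume xV: "x \<in> ?V"
    have f0: "0 \<le> extinction_prob ?V ?E r {x}" using ext_bounds[OF gd] xV by simp
    show "(if x \<in> PS then 1 / (1 + r) else 0) + (if x \<in> resset l m then g else 0) \<le> extinction_prob ?V ?E r {x}"
    proof (cases x)
      case (Res i a)
      hence ia: "i < l" "a < m" using xV by (auto simp: inV)
      have "x \<notin> PS" "x \<in> resset l m" using Res ia unfolding PS_def resset_def by auto
      thus ?thesis using gR[OF ia] Res by simp
    next
      case (Path i j)
      hence ij: "i < l" "j < k" using xV by (auto simp: inV)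
      have "x \<in> PS" "x \<notin> resset l m" using Path ij unfolding PS_def resset_def by auto
      thus ?thesis using potA[OF k l m _ ij] r Path by simp
    next
      case Centre
      have "x \<notin> PS" "x \<notin> resset l m" using Centre unfolding PS_def resset_def by auto
      thus ?thesis using f0 by simp
    qed
  qed
  moreover have "(\<Sum>x\<in>?V. (if x \<in> PS then 1 / (1 + r) else 0) + (if x \<in> resset l m then g else 0))
      = l * k / (1 + r) + l * m * g"
    unfolding sum.distrib sum_fam_V[OF PSV] sum_fam_V[OF RV] card_resset
    using card_PS[of l k] unfolding PS_def[symmetric] by (simp add: mult.commute)
  ultimately show ?thesis by simp
qed

definition Cst :: "real \<Rightarrow> real" where "Cst r = (1 + r) * (3 + 4 * r) + 384 * r^4"

theorem theorem4p1:
  fixes r :: real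
  assumes "r > 1"
  shows "\<exists>c>0. \<forall>k l m :: nat. 0 < k \<longrightarrow> 0 < l \<longrightarrow> 0 < m \<longrightarrow>
           (let n = l * (k + m) + 1 in
              (\<Sum>x\<in>superstar_V k l m. extinction_prob (superstar_V k l m) (superstar_E k l m) r {x})
                / real n
              \<ge> 1 / (c * (real n * ln (real n)) powr (1/3)))"
proof (intro exI[of _ "Cst r"] conjI allI impI)
  have r: "1 < r" by fact
  show C0: "0 < Cst r" unfolding Cst_def using r by (simp add: add_pos_pos)
  fix k l m :: nat assume k: "0 < k" and l: "0 < l" and m: "0 < m"
  let ?T = "(\<Sum>x\<in>superstar_V k l m. extinction_prob (superstar_V k l m) (superstar_E k l m) r {x})"
  define g where "g = (if 4 * r \<le> real m - 1 then max (1 / (3 * r^2 * l)) (1 / (128 * r^4 * k)) else 1 / (3 * r^2 * l))"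
  have g0: "0 \<le> g" unfolding g_def using r by (auto simp: max_def)
  have gR: "\<And>i a. i < l \<Longrightarrow> a < m \<Longrightarrow> g \<le> extinction_prob (superstar_V k l m) (superstar_E k l m) r {Res i a}"
    unfolding g_def using res_bound1[OF k l m r] res_bound2[OF k l m r] by auto
  have Tl: "real l * real k / (1 + r) + real l * real m * g \<le> ?T" by (rule sum_lower[OF k l m r g0 gR])
  have gb: "4 * r \<le> real m - 1 \<Longrightarrow> 1 / (3 * r^2 * l) \<le> g \<and> 1 / (128 * r^4 * k) \<le> g"
    unfolding g_def by auto
  have main: "(real l * (real k + real m) + 1) powr (2/3) / Cst r \<le> ?T"
    unfolding Cst_def
    by (rule core[OF r _ _ _ _ g0]) (use k l m Tl gb in \<open>auto simp: mult.commute mult.left_commute\<close>)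
  define n where "n = l * (k + m) + 1"
  have nr: "real n = real l * (real k + real m) + 1" unfolding n_def by simp
  have n3: "3 \<le> real n"
  proof -
    have "1 \<le> real l" "2 \<le> real k + real m" using k l m by auto
    hence "1 * 2 \<le> real l * (real k + real m)" by (intro mult_mono) auto
    thus ?thesis unfolding nr by simp
  qed
  have n0: "0 < real n" using n3 by simp
  have ln1: "1 \<le> ln (real n)"
  proof -
    have "ln 3 \<le> ln (real n)" using n3 by simp
    thus ?thesis using ln3_gt_1 by simp
  qed
  have Tn: "real n powr (2/3) / Cst r \<le> ?T" using main unfolding nr .
  have split: "real n = real n powr (2/3) * real n powr (1/3)"
  proof -
    have "real n powr (2/3) * real n powr (1/3) = real n powr (2/3 + 1/3)" by (simp only: powr_add)
    also have "\<dots> = real n" using n0 by simp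
    finally show ?thesis by simp
  qed
  have p1: "0 < real n powr (1/3)" "0 < real n powr (2/3)" using n0 by auto
  have "1 / (Cst r * real n powr (1/3)) = real n powr (2/3) / Cst r / real n"
    using p1 C0 by (subst (2) split) (simp add: field_simps)
  also have "\<dots> \<le> ?T / real n" using Tn n0 by (intro divide_right_mono) auto
  finally have A: "1 / (Cst r * real n powr (1/3)) \<le> ?T / real n" .
  have "real n powr (1/3) \<le> (real n * ln (real n)) powr (1/3)"
  proof (rule powr_mono2)
    show "real n \<le> real n * ln (real n)" using ln1 n0 by (simp add: mult_le_cancel_left1)
  qed (use n0 in auto)
  hence "1 / (Cst r * (real n * ln (real n)) powr (1/3)) \<le> 1 / (Cst r * real n powr (1/3))"
    using p1 C0 by (intro divide_left_mono mult_left_mono mult_pos_pos) auto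
  hence "1 / (Cst r * (real n * ln (real n)) powr (1/3)) \<le> ?T / real n" using A by linarith
  thus "let n = l * (k + m) + 1 in 1 / (Cst r * (real n * ln (real n)) powr (1/3)) \<le> ?T / real n"
    unfolding n_def[symmetric] Let_def by simp
qed


end
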